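(* Let $(V,o)$ be a normal surface singularity with $p_f(V,o)>0$ and $Z^2=-2$, and let $\pi\colon X\to V$ be the minimal resolution. Assume that the fundamental cycle $Z$ is essentially irreducible and that $D_m=Z_{min}$, where $D_m$ is the smallest term of the Yau sequence for $Z$. Then $(V,o)$ is numerically Gorenstein and its canonical cycle is $Z_K=p_f(V,o)\,Y$, where $Y$ is the Yau cycle.
   Context: Let $\pi^{-1}(o)=\bigcup_{i=1}^n E_i$ be the decomposition of the exceptional set into irreducible components. A cycle is a divisor $D=\sum d_iE_i$ with $d_i\in\mathbb Z$; $D_1\le D_2$ means coefficientwise inequality, $D_1<D_2$ means $D_1\le D_2$ and $D_1\ne D_2$; $\mathrm{supp}\,D$ is the union of the $E_i$ with $d_i\neq0$. $K=K_X$ is the canonical divisor of $X$, and for a cycle $D>0$ its arithmetic genus is $p_a(D)=1+\frac12(D^2+D\cdot K)$. The fundamental cycle $Z$ is the smallest cycle $D>0$ with support $\pi^{-1}(o)$ such that $D\cdot E_i\le0$ for all $i$; $p_f(V,o)=p_a(Z)$ is the fundamental genus and $-Z^2$ the degree. For cycles $C$ and $D>0$, "$\mathcal O_D(-C)$ is numerically trivial" means $C\cdot E=0$ for every irreducible component $E\le D$. When $p_f(V,o)>0$, $Z_{min}$ denotes the unique minimal cycle $0<Z_{min}\le Z$ with $p_a(Z_{min})=p_a(Z)$. Yau sequence: if $D$ is a cycle that is the fundamental cycle on its own support, with $Z_{min}\le D$, $p_a(D)=p_f(V,o)$ and $D\cdot E=0$ for every component $E\le Z_{min}$, its Tyurina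 component is the unique maximal cycle $0<D'<D$ such that $\mathcal O_{D'}(-D)$ is numerically trivial and $p_a(D')=p_a(D)$ (it is again the fundamental cycle on its support). Put $D_1=Z$ and let $D_{i+1}$ be the Tyurina component of $D_i$ as long as $D_i\cdot E=0$ for all components $E\le Z_{min}$; the process stops at the first $D_m$ with $D_m\cdot Z_{min}<0$ ($m=1$ if $Z\cdot Z_{min}<0$). The sequence $0<D_m<\dots<D_1=Z$ is the Yau sequence, $m$ its length, and $Y=\sum_{i=1}^mD_i$ the Yau cycle. A $(-2)$-curve is an irreducible exceptional curve $E$ which is a smooth rational curve with $E^2=-2$. $Z$ is essentially irreducible if there is an irreducible component $A\le Z$ which is not a $(-2)$-curve such that, with $k$ the coefficient of $A$ in $Z$, either $Z=kA$ or every irreducible component of $Z-kA$ is a $(-2)$-curve. The canonical cycle $Z_K$ is the cycle with rational coefficients supported on $\pi^{-1}(o)$ satisfying $Z_K\cdot E_i=-K\cdot E_i$ for all $i$; $(V,o)$ is numerically Gorenstein if $Z_K$ has integer coefficients. *)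

theory Defs
  imports Complex_Main
begin

text \<open>Combinatorial model of the exceptional set of a resolution of a normal surface
singularity: the irreducible components are indexed by a finite type 'i;
M i j = E_i . E_j is the intersection matrix; g i is the arithmetic genus of E_i.\<close>

type_synonym 'i cycle = "'i \<Rightarrow> int"

definition zc :: "'i cycle" where
  "zc = (\<lambda>_. 0)"

definition E :: "'i \<Rightarrow> 'i cycle" where
  "E i = (\<lambda>j. if j = i then 1 else 0)"

definition inter :: "('i::finite \<Rightarrow> 'i \<Rightarrow> int) \<Rightarrow> 'i cycle \<Rightarrow> 'i cycle \<Rightarrow> int" where
  "inter M C D = (\<Sum>i\<in>UNIV. \<Sum>j\<in>UNIV. C i * D j * M i j)"

text \<open>K . E_i by adjunction: 2 p_a(E_i) - 2 = E_i^2 + K . E_i.\<close>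
definition canon :: "('i \<Rightarrow> 'i \<Rightarrow> int) \<Rightarrow> ('i \<Rightarrow> nat) \<Rightarrow> 'i \<Rightarrow> int" where
  "canon M g i = 2 * int (g i) - 2 - M i i"

definition Kdot :: "('i::finite \<Rightarrow> 'i \<Rightarrow> int) \<Rightarrow> ('i \<Rightarrow> nat) \<Rightarrow> 'i cycle \<Rightarrow> int" where
  "Kdot M g D = (\<Sum>i\<in>UNIV. D i * canon M g i)"

text \<open>Arithmetic genus; D^2 + K.D is always even, so the division is exact.\<close>
definition pa :: "('i::finite \<Rightarrow> 'i \<Rightarrow> int) \<Rightarrow> ('i \<Rightarrow> nat) \<Rightarrow> 'i cycle \<Rightarrow> int" where
  "pa M g D = 1 + (inter M D D + Kdot M g D) div 2"

definition supp :: "'i cycle \<Rightarrow> 'i set" where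
  "supp D = {i. D i \<noteq> 0}"

definition exc_config :: "('i::finite \<Rightarrow> 'i \<Rightarrow> int) \<Rightarrow> bool" where
  "exc_config M \<longleftrightarrow>
     (\<forall>i j. M i j = M j i) \<and>
     (\<forall>i j. i \<noteq> j \<longrightarrow> 0 \<le> M i j) \<and>
     (\<forall>D. D \<noteq> zc \<longrightarrow> inter M D D < 0) \<and>
     (\<forall>S. S \<noteq> {} \<and> S \<noteq> UNIV \<longrightarrow> (\<exists>i\<in>S. \<exists>j. j \<notin> S \<and> M i j \<noteq> 0))"

definition minimal_resolution :: "('i \<Rightarrow> 'i \<Rightarrow> int) \<Rightarrow> ('i \<Rightarrow> nat) \<Rightarrow> bool" where
  "minimal_resolution M g \<longleftrightarrow> (\<forall>i. \<not> (g i = 0 \<and> M i i = -1))"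

definition minus2_curve :: "('i \<Rightarrow> 'i \<Rightarrow> int) \<Rightarrow> ('i \<Rightarrow> nat) \<Rightarrow> 'i \<Rightarrow> bool" where
  "minus2_curve M g i \<longleftrightarrow> g i = 0 \<and> M i i = -2"

definition is_fund_on :: "('i::finite \<Rightarrow> 'i \<Rightarrow> int) \<Rightarrow> 'i set \<Rightarrow> 'i cycle \<Rightarrow> bool" where
  "is_fund_on M S D \<longleftrightarrow>
     zc < D \<and> supp D = S \<and> (\<forall>i\<in>S. inter M D (E i) \<le> 0) \<and>
     (\<forall>D'. zc < D' \<and> supp D' = S \<and> (\<forall>i\<in>S. inter M D' (E i) \<le> 0) \<longrightarrow> D \<le> D')"

definition fund_cycle :: "('i::finite \<Rightarrow> 'i \<Rightarrow> int) \<Rightarrow> 'i cycle" where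
  "fund_cycle M = (THE D. is_fund_on M UNIV D)"

definition is_min_genus_cycle :: "('i::finite \<Rightarrow> 'i \<Rightarrow> int) \<Rightarrow> ('i \<Rightarrow> nat) \<Rightarrow> 'i cycle \<Rightarrow> bool" where
  "is_min_genus_cycle M g D \<longleftrightarrow>
     zc < D \<and> D \<le> fund_cycle M \<and> pa M g D = pa M g (fund_cycle M) \<and>
     (\<forall>D'. zc < D' \<and> D' \<le> D \<and> pa M g D' = pa M g (fund_cycle M) \<longrightarrow> D' = D)"

definition Zmin :: "('i::finite \<Rightarrow> 'i \<Rightarrow> int) \<Rightarrow> ('i \<Rightarrow> nat) \<Rightarrow> 'i cycle" where
  "Zmin M g = (THE D. is_min_genus_cycle M g D)"

text \<open>O_D(-C) numerically trivial: C . E = 0 for every component E \<le> D.\<close>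
definition num_trivial :: "('i::finite \<Rightarrow> 'i \<Rightarrow> int) \<Rightarrow> 'i cycle \<Rightarrow> 'i cycle \<Rightarrow> bool" where
  "num_trivial M C D \<longleftrightarrow> (\<forall>i\<in>supp D. inter M C (E i) = 0)"

definition is_tyurina :: "('i::finite \<Rightarrow> 'i \<Rightarrow> int) \<Rightarrow> ('i \<Rightarrow> nat) \<Rightarrow> 'i cycle \<Rightarrow> 'i cycle \<Rightarrow> bool" where
  "is_tyurina M g D D' \<longleftrightarrow>
     zc < D' \<and> D' < D \<and> num_trivial M D D' \<and> pa M g D' = pa M g D \<and>
     (\<forall>D''. zc < D'' \<and> D'' < D \<and> num_trivial M D D'' \<and> pa M g D'' = pa M g D \<longrightarrow> D'' \<le> D')"

definition is_yau_seq :: "('i::finite \<Rightarrow> 'i \<Rightarrow> int) \<Rightarrow> ('i \<Rightarrow> nat) \<Rightarrow> 'i cycle list \<Rightarrow> bool" where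
  "is_yau_seq M g ds \<longleftrightarrow>
     ds \<noteq> [] \<and> ds ! 0 = fund_cycle M \<and>
     (\<forall>k. Suc k < length ds \<longrightarrow>
        num_trivial M (ds ! k) (Zmin M g) \<and> is_tyurina M g (ds ! k) (ds ! Suc k)) \<and>
     inter M (last ds) (Zmin M g) < 0"

definition yau_cycle :: "'i cycle list \<Rightarrow> 'i cycle" where
  "yau_cycle ds = (\<lambda>i. (\<Sum>D\<leftarrow>ds. D i))"

definition ess_irreducible :: "('i \<Rightarrow> 'i \<Rightarrow> int) \<Rightarrow> ('i \<Rightarrow> nat) \<Rightarrow> 'i cycle \<Rightarrow> bool" where
  "ess_irreducible M g Z \<longleftrightarrow>
     (\<exists>A. Z A \<noteq> 0 \<and> \<not> minus2_curve M g A \<and>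
        (Z = (\<lambda>j. Z A * E A j) \<or>
         (\<forall>j\<in>supp (\<lambda>j. Z j - Z A * E A j). minus2_curve M g j)))"

definition is_canonical_cycle :: "('i::finite \<Rightarrow> 'i \<Rightarrow> int) \<Rightarrow> ('i \<Rightarrow> nat) \<Rightarrow> ('i \<Rightarrow> rat) \<Rightarrow> bool" where
  "is_canonical_cycle M g ZK \<longleftrightarrow>
     (\<forall>i. (\<Sum>j\<in>UNIV. ZK j * of_int (M j i)) = - of_int (canon M g i))"

definition canonical_cycle :: "('i::finite \<Rightarrow> 'i \<Rightarrow> int) \<Rightarrow> ('i \<Rightarrow> nat) \<Rightarrow> 'i \<Rightarrow> rat" where
  "canonical_cycle M g = (THE ZK. is_canonical_cycle M g ZK)"

definition numerically_gorenstein :: "('i::finite \<Rightarrow> 'i \<Rightarrow> int) \<Rightarrow> ('i \<Rightarrow> nat) \<Rightarrow> bool" where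
  "numerically_gorenstein M g \<longleftrightarrow> (\<forall>i. canonical_cycle M g i \<in> \<int>)"

end

theory Submission
  imports Defs "Jordan_Normal_Form.Determinant"
begin

definition qf :: "('i::finite \<Rightarrow> 'i \<Rightarrow> int) \<Rightarrow> ('i \<Rightarrow> nat) \<Rightarrow> 'i cycle \<Rightarrow> int" where
  "qf M g D = inter M D D + Kdot M g D"

lemma inter_add_left: "inter M (\<lambda>x. C x + D x) X = inter M C X + inter M D X"
  unfolding inter_def by (simp add: distrib_right sum.distrib)
lemma inter_add_right: "inter M X (\<lambda>x. C x + D x) = inter M X C + inter M X D"
  unfolding inter_def by (simp add: distrib_right distrib_left sum.distrib)
lemma inter_diff_left: "inter M (\<lambda>x. C x - D x) X = inter M C X - inter M D X"
  unfolding inter_def by (simp add: left_diff_distrib sum_subtractf)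
lemma inter_diff_right: "inter M X (\<lambda>x. C x - D x) = inter M X C - inter M X D"
  unfolding inter_def by (simp add: left_diff_distrib right_diff_distrib sum_subtractf)
lemma inter_zc_left[simp]: "inter M zc X = 0" unfolding inter_def zc_def by simp
lemma inter_zc_right[simp]: "inter M X zc = 0" unfolding inter_def zc_def by simp

lemma inter_E_right: "inter M D (E i) = (\<Sum>j\<in>UNIV. D j * M j i)"
  unfolding inter_def E_def by (simp add: if_distrib if_distribR sum.delta cong: if_cong)
lemma inter_E_left: "inter M (E i) D = (\<Sum>j\<in>UNIV. D j * M i j)"
proof -
  have "\<And>a. (\<Sum>b\<in>UNIV. E i a * D b * M a b) = (if a = i then (\<Sum>b\<in>UNIV. D b * M i b) else 0)"
    unfolding E_def by auto
  then show ?thesis unfolding inter_def by simp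
qed

lemma inter_sym: assumes "\<forall>i j. M i j = M j i" shows "inter M C D = inter M D C"
  unfolding inter_def
  by (subst sum.swap) (simp add: assms mult.commute mult.left_commute)

lemma inter_as_dot: assumes "\<forall>i j. M i j = M j i"
  shows "inter M C D = (\<Sum>i\<in>UNIV. C i * inter M D (E i))"
  unfolding inter_E_right unfolding inter_def
  by (simp add: sum_distrib_left mult.assoc assms)

lemma Kdot_add: "Kdot M g (\<lambda>x. C x + D x) = Kdot M g C + Kdot M g D"
  unfolding Kdot_def by (simp add: distrib_right sum.distrib)
lemma Kdot_diff: "Kdot M g (\<lambda>x. C x - D x) = Kdot M g C - Kdot M g D"
  unfolding Kdot_def by (simp add: left_diff_distrib sum_subtractf)
lemma Kdot_E: "Kdot M g (E i) = canon M g i"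
proof -
  have "\<And>a. E i a * canon M g a = (if a = i then canon M g i else 0)" unfolding E_def by auto
  then show ?thesis unfolding Kdot_def by simp
qed
lemma inter_EE: "inter M (E i) (E j) = M i j"
proof -
  have "\<And>a. E i a * M a j = (if a = i then M i j else 0)" unfolding E_def by auto
  then show ?thesis unfolding inter_E_right by simp
qed


lemma even_double_sum:
  assumes "\<And>i j. f i j = f j i" and "finite S"
  shows "even ((\<Sum>i\<in>S. \<Sum>j\<in>S. f i j) - (\<Sum>i\<in>S. f i i :: int))"
  using assms(2)
proof (induction S rule: finite_induct)
  case empty then show ?case by simp
next
  case (insert x S)
  have e: "(\<Sum>i\<in>insert x S. \<Sum>j\<in>insert x S. f i j) =
     f x x + 2 * (\<Sum>j\<in>S. f x j) + (\<Sum>i\<in>S. \<Sum>j\<in>S. f i j)"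
  proof -
    have "(\<Sum>i\<in>insert x S. \<Sum>j\<in>insert x S. f i j) = (\<Sum>j\<in>insert x S. f x j) + (\<Sum>i\<in>S. \<Sum>j\<in>insert x S. f i j)"
      using insert.hyps by (simp add: sum.insert)
    also have "(\<Sum>j\<in>insert x S. f x j) = f x x + (\<Sum>j\<in>S. f x j)" using insert.hyps by simp
    also have "(\<Sum>i\<in>S. \<Sum>j\<in>insert x S. f i j) = (\<Sum>i\<in>S. f i x + (\<Sum>j\<in>S. f i j))"
      using insert.hyps by (intro sum.cong) auto
    also have "\<dots> = (\<Sum>j\<in>S. f x j) + (\<Sum>i\<in>S. \<Sum>j\<in>S. f i j)"
      by (simp add: sum.distrib assms(1)[of _ x])
    finally show ?thesis by simp
  qed
  have e2: "(\<Sum>i\<in>insert x S. f i i) = f x x + (\<Sum>i\<in>S. f i i)" using insert.hyps by simp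
  have "(\<Sum>i\<in>insert x S. \<Sum>j\<in>insert x S. f i j) - (\<Sum>i\<in>insert x S. f i i)
     = 2 * (\<Sum>j\<in>S. f x j) + ((\<Sum>i\<in>S. \<Sum>j\<in>S. f i j) - (\<Sum>i\<in>S. f i i))"
    unfolding e e2 by simp
  then show ?case using insert.IH by simp
qed


lemma qf_even: assumes "\<forall>i j. M i j = M j i" shows "even (qf M g D)"
proof -
  let ?f = "\<lambda>i j. D i * D j * M i j"
  have s: "\<And>i j. ?f i j = ?f j i" using assms by (simp add: mult.commute)
  have h1: "even ((\<Sum>i\<in>UNIV. \<Sum>j\<in>UNIV. ?f i j) - (\<Sum>i\<in>UNIV. ?f i i))"
    by (rule even_double_sum[OF s]) simp
  have h2: "even (\<Sum>i\<in>UNIV. ?f i i + D i * canon M g i)"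
  proof (rule dvd_sum)
    fix i assume "i \<in> (UNIV::'a set)"
    have "?f i i + D i * canon M g i = (D i * (D i - 1)) * M i i + 2 * (D i * (int (g i) - 1))"
      unfolding canon_def by (simp add: algebra_simps)
    moreover have "even (D i * (D i - 1))" by simp
    ultimately show "even (?f i i + D i * canon M g i)" by simp
  qed
  have "qf M g D = ((\<Sum>i\<in>UNIV. \<Sum>j\<in>UNIV. ?f i j) - (\<Sum>i\<in>UNIV. ?f i i)) + (\<Sum>i\<in>UNIV. ?f i i + D i * canon M g i)"
    unfolding qf_def inter_def Kdot_def by (simp add: sum.distrib)
  then show ?thesis using h1 h2 by simp
qed

lemma pa_qf: assumes "\<forall>i j. M i j = M j i" shows "2 * pa M g D = 2 + qf M g D"
proof -
  have "even (qf M g D)" by (rule qf_even[OF assms])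
  then show ?thesis unfolding pa_def qf_def[symmetric] by auto
qed

lemma qf_add: assumes "\<forall>i j. M i j = M j i"
  shows "qf M g (\<lambda>x. C x + D x) = qf M g C + qf M g D + 2 * inter M C D"
  unfolding qf_def inter_add_left inter_add_right Kdot_add using inter_sym[OF assms, of D C] by simp

lemma pa_add: assumes "\<forall>i j. M i j = M j i"
  shows "pa M g (\<lambda>x. C x + D x) = pa M g C + pa M g D + inter M C D - 1"
proof -
  have "2 * pa M g (\<lambda>x. C x + D x) = 2 * (pa M g C + pa M g D + inter M C D - 1)"
    using pa_qf[OF assms, of g "\<lambda>x. C x + D x"] pa_qf[OF assms, of g C] pa_qf[OF assms, of g D] qf_add[OF assms, of g C D]
    by simp
  then show ?thesis by simp
qed

lemma pa_E: assumes "\<forall>i j. M i j = M j i" shows "pa M g (E i) = int (g i)"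
proof -
  have "2 * pa M g (E i) = 2 * int (g i)"
    using pa_qf[OF assms, of g "E i"] unfolding qf_def inter_EE Kdot_E canon_def by simp
  then show ?thesis by simp
qed

lemma exists_strict_neg:
  fixes M :: "'i::finite \<Rightarrow> 'i \<Rightarrow> int"
  assumes symM: "\<forall>i j. M i j = M j i"
    and nd: "\<forall>D. D \<noteq> zc \<longrightarrow> Defs.inter M D D < 0"
  shows "\<exists>X. \<forall>i. Defs.inter M X (E i) < 0"
proof -
  let ?n = "card (UNIV :: 'i set)"
  obtain e :: "nat \<Rightarrow> 'i" where e: "bij_betw e {0..<?n} UNIV"
    using ex_bij_betw_nat_finite[of "UNIV :: 'i set"] by auto
  define f where "f = the_inv_into {0..<?n} e"
  have fe: "\<And>k. k < ?n \<Longrightarrow> f (e k) = k" unfolding f_def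
    using e by (simp add: bij_betw_def the_inv_into_f_f)
  have ef: "\<And>x. e (f x) = x" unfolding f_def
    using e by (simp add: bij_betw_def f_the_inv_into_f)
  have fn: "\<And>x. f x < ?n" unfolding f_def
    proof -
    fix x
    have "the_inv_into {0..<?n} e x \<in> {0..<?n}"
      using e unfolding bij_betw_def by (intro the_inv_into_into) auto
    then show "the_inv_into {0..<?n} e x < ?n" by simp
  qed
  have reidx: "\<And>h :: 'i \<Rightarrow> int. (\<Sum>y\<in>UNIV. h y) = (\<Sum>k\<in>{0..<?n}. h (e k))"
  proof -
    fix h :: "'i \<Rightarrow> int"
    show "(\<Sum>y\<in>UNIV. h y) = (\<Sum>k\<in>{0..<?n}. h (e k))"
      using sum.reindex[of e "{0..<?n}" h] e by (simp add: bij_betw_def)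
  qed
  define A where "A = mat ?n ?n (\<lambda>(i,j). M (e i) (e j))"
  have A: "A \<in> carrier_mat ?n ?n" unfolding A_def by simp
  have Av: "\<And>v i. v \<in> carrier_vec ?n \<Longrightarrow> i < ?n \<Longrightarrow> (A *\<^sub>v v) $ i = (\<Sum>y\<in>UNIV. M (e i) y * v $ (f y))"
  proof -
    fix v :: "int vec" and i assume v: "v \<in> carrier_vec ?n" and i: "i < ?n"
    have "(A *\<^sub>v v) $ i = (\<Sum>k\<in>{0..<?n}. M (e i) (e k) * v $ k)"
      using v i A unfolding A_def by (simp add: scalar_prod_def)
    also have "\<dots> = (\<Sum>k\<in>{0..<?n}. M (e i) (e k) * v $ (f (e k)))"
      by (intro sum.cong) (auto simp: fe)
    also have "\<dots> = (\<Sum>y\<in>UNIV. M (e i) y * v $ (f y))" by (rule reidx[symmetric])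
    finally show "(A *\<^sub>v v) $ i = (\<Sum>y\<in>UNIV. M (e i) y * v $ (f y))" .
  qed
  have dotv: "\<And>v x. v \<in> carrier_vec ?n \<Longrightarrow> Defs.inter M (\<lambda>y. v $ f y) (E x) = (A *\<^sub>v v) $ (f x)"
  proof -
    fix v :: "int vec" and x assume v: "v \<in> carrier_vec ?n"
    have "Defs.inter M (\<lambda>y. v $ f y) (E x) = (\<Sum>y\<in>UNIV. v $ f y * M y x)" by (rule inter_E_right)
    also have "\<dots> = (\<Sum>y\<in>UNIV. M (e (f x)) y * v $ (f y))" using symM by (simp add: ef mult.commute)
    also have "\<dots> = (A *\<^sub>v v) $ (f x)" using Av[OF v fn] by simp
    finally show "Defs.inter M (\<lambda>y. v $ f y) (E x) = (A *\<^sub>v v) $ (f x)" .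
  qed
  have detA: "det A \<noteq> 0"
  proof
    assume "det A = 0"
    then obtain v where v: "v \<in> carrier_vec ?n" "v \<noteq> 0\<^sub>v ?n" "A *\<^sub>v v = 0\<^sub>v ?n"
      using det_0_iff_vec_prod_zero[OF A] by auto
    define W where "W = (\<lambda>y. v $ f y)"
    have "\<And>x. Defs.inter M W (E x) = 0" unfolding W_def using dotv[OF v(1)] v(3) fn by simp
    then have "Defs.inter M W W = 0" using inter_as_dot[OF symM, of W W] by simp
    moreover have "W \<noteq> zc"
    proof
      assume W0: "W = zc"
      have "v = 0\<^sub>v ?n"
      proof (rule eq_vecI)
        fix k assume "k < dim_vec (0\<^sub>v ?n)"
        then have k: "k < ?n" by simp
        have "v $ k = W (e k)" unfolding W_def using fe[OF k] by simp
        then show "v $ k = 0\<^sub>v ?n $ k" using W0 k unfolding zc_def by simp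
      qed (use v in auto)
      with v(2) show False by simp
    qed
    ultimately show False using nd by auto
  qed
  define c where "c = vec ?n (\<lambda>_. - sgn (det A))"
  define b where "b = adj_mat A *\<^sub>v c"
  have c: "c \<in> carrier_vec ?n" unfolding c_def by simp
  have b: "b \<in> carrier_vec ?n" unfolding b_def by (rule mult_mat_vec_carrier[OF adj_mat(1)[OF A] c])
  have Ab: "\<And>i. i < ?n \<Longrightarrow> (A *\<^sub>v b) $ i = - \<bar>det A\<bar>"
  proof -
    fix i assume i: "i < ?n"
    have "A *\<^sub>v b = (A * adj_mat A) *\<^sub>v c" unfolding b_def
      using assoc_mult_mat_vec[OF A adj_mat(1)[OF A] c] by simp
    also have "\<dots> = (det A \<cdot>\<^sub>m 1\<^sub>m ?n) *\<^sub>v c" using adj_mat(2)[OF A] by simp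
    finally have "(A *\<^sub>v b) $ i = ((det A \<cdot>\<^sub>m 1\<^sub>m ?n) *\<^sub>v c) $ i" by simp
    also have "\<dots> = (\<Sum>k = 0..<?n. det A * (if k = i then 1 else 0) * c $ k)"
      using i c by (simp add: scalar_prod_def)
    also have "\<dots> = (\<Sum>k = 0..<?n. (if k = i then det A * c $ i else 0))"
      by (intro sum.cong) auto
    also have "\<dots> = det A * c $ i" using i by simp
    also have "\<dots> = - \<bar>det A\<bar>" unfolding c_def using i by (simp add: abs_sgn)
    finally show "(A *\<^sub>v b) $ i = - \<bar>det A\<bar>" .
  qed
  show ?thesis
  proof (intro exI allI)
    fix x
    have "Defs.inter M (\<lambda>y. b $ f y) (E x) = - \<bar>det A\<bar>" using dotv[OF b] Ab[OF fn] by simp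
    then show "Defs.inter M (\<lambda>y. b $ f y) (E x) < 0" using detA by simp
  qed
qed

definition nefc :: "('i::finite \<Rightarrow> 'i \<Rightarrow> int) \<Rightarrow> 'i cycle \<Rightarrow> bool" where
  "nefc M D \<longleftrightarrow> (\<forall>i. inter M D (E i) \<le> 0)"

lemma zc_less_iff: "zc < D \<longleftrightarrow> (\<forall>i. 0 \<le> D i) \<and> (\<exists>i. D i \<noteq> 0)"
proof -
  have "zc < D \<longleftrightarrow> (\<forall>i. 0 \<le> D i) \<and> \<not> (\<forall>i. D i \<le> 0)"
    unfolding zc_def less_fun_def le_fun_def by simp
  also have "\<dots> \<longleftrightarrow> (\<forall>i. 0 \<le> D i) \<and> (\<exists>i. D i \<noteq> 0)"
  proof
    assume "(\<forall>i. 0 \<le> D i) \<and> (\<exists>i. D i \<noteq> 0)"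
    then obtain i where "0 \<le> D i" "D i \<noteq> 0" by blast
    then have "\<not> D i \<le> 0" by simp
    then show "(\<forall>i. 0 \<le> D i) \<and> \<not> (\<forall>i. D i \<le> 0)" using \<open>(\<forall>i. 0 \<le> D i) \<and> (\<exists>i. D i \<noteq> 0)\<close> by blast
  next
    assume h: "(\<forall>i. 0 \<le> D i) \<and> \<not> (\<forall>i. D i \<le> 0)"
    then obtain i where "\<not> D i \<le> 0" by blast
    then have "D i \<noteq> 0" by auto
    then show "(\<forall>i. 0 \<le> D i) \<and> (\<exists>i. D i \<noteq> 0)" using h by blast
  qed
  finally show ?thesis .
qed

lemma zc_le_iff: "zc \<le> D \<longleftrightarrow> (\<forall>i. 0 \<le> D i)"
  unfolding zc_def le_fun_def by simp

locale cfg =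
  fixes M :: "'i::finite \<Rightarrow> 'i \<Rightarrow> int" and g :: "'i \<Rightarrow> nat"
  assumes exc: "exc_config M" and minres: "minimal_resolution M g"
begin

lemma excs: "(\<forall>i j. M i j = M j i) \<and>
     (\<forall>i j. i \<noteq> j \<longrightarrow> 0 \<le> M i j) \<and>
     (\<forall>D. D \<noteq> zc \<longrightarrow> inter M D D < 0) \<and>
     (\<forall>S. S \<noteq> {} \<and> S \<noteq> UNIV \<longrightarrow> (\<exists>i\<in>S. \<exists>j. j \<notin> S \<and> M i j \<noteq> 0))"
  using exc unfolding exc_config_def .
lemma symM: "\<forall>i j. M i j = M j i" using excs by (rule conjunct1)
lemma offd: "i \<noteq> j \<Longrightarrow> 0 \<le> M i j" using conjunct1[OF conjunct2[OF excs]] by simp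
lemma negdef: "D \<noteq> zc \<Longrightarrow> inter M D D < 0" using conjunct1[OF conjunct2[OF conjunct2[OF excs]]] by simp
lemma conn: "S \<noteq> {} \<Longrightarrow> S \<noteq> UNIV \<Longrightarrow> \<exists>i\<in>S. \<exists>j. j \<notin> S \<and> M i j \<noteq> 0"
  using conjunct2[OF conjunct2[OF conjunct2[OF excs]]] by simp

lemma Mii_neg: "M i i < 0"
proof -
  have "E i \<noteq> zc"
  proof
    assume "E i = zc" then have "E i i = zc i" by simp
    then show False unfolding E_def zc_def by simp
  qed
  then have "inter M (E i) (E i) < 0" by (rule negdef)
  then show ?thesis using inter_EE[of M i i] by simp
qed

lemma isym: "inter M C D = inter M D C" by (rule inter_sym[OF symM])
lemma idot: "inter M C D = (\<Sum>i\<in>UNIV. C i * inter M D (E i))" by (rule inter_as_dot[OF symM])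
lemma paadd: "pa M g (\<lambda>x. C x + D x) = pa M g C + pa M g D + inter M C D - 1" by (rule pa_add[OF symM])
lemma paE: "pa M g (E i) = int (g i)" by (rule pa_E[OF symM])
lemma pa2: "2 * pa M g D = 2 + qf M g D" by (rule pa_qf[OF symM])

lemma dot_outside_nonneg:
  assumes "\<forall>j. 0 \<le> W j" and "W i = 0"
  shows "0 \<le> inter M W (E i)"
  unfolding inter_E_right
proof (rule sum_nonneg)
  fix j
  show "0 \<le> W j * M j i"
  proof (cases "j = i")
    case True then show ?thesis using assms by simp
  next
    case False then show ?thesis using assms offd[OF False] by simp
  qed
qed

lemma dot_neg_pos:
  assumes "\<forall>j. 0 \<le> W j" and "inter M W (E i) < 0"
  shows "0 < W i"
proof -
  have "W i \<noteq> 0" using dot_outside_nonneg[OF assms(1), of i] assms(2) by force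
  then show ?thesis using assms(1) by (simp add: order_le_neq_trans)
qed

lemma dot_mono_off:
  assumes "X i = Y i" and "\<forall>j. X j \<le> Y j"
  shows "inter M X (E i) \<le> inter M Y (E i)"
proof -
  have "0 \<le> inter M (\<lambda>x. Y x - X x) (E i)"
  proof (rule dot_outside_nonneg)
    show "\<forall>j. 0 \<le> Y j - X j" using assms(2) by simp
    show "Y i - X i = 0" using assms(1) by simp
  qed
  then show ?thesis using inter_diff_left[of M Y X "E i"] by linarith
qed

lemma positivity:
  assumes "\<forall>i. inter M X (E i) \<le> 0"
  shows "\<forall>i. 0 \<le> X i"
proof -
  define P where "P = (\<lambda>i. max 0 (X i))"
  define N where "N = (\<lambda>i. max 0 (- X i))"
  have XPN: "X = (\<lambda>i. P i - N i)" unfolding P_def N_def by auto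
  have "inter M N X \<le> 0" unfolding idot[of N X]
    by (rule sum_nonpos) (use assms in \<open>auto simp: N_def mult_nonneg_nonpos\<close>)
  moreover have "0 \<le> inter M N P" unfolding inter_def
  proof (intro sum_nonneg)
    fix i j
    show "0 \<le> N i * P j * M i j"
    proof (cases "i = j")
      case True then show ?thesis unfolding N_def P_def by (cases "0 \<le> X j") auto
    next
      case False then show ?thesis using offd[OF False] unfolding N_def P_def by simp
    qed
  qed
  moreover have "inter M N X = inter M N P - inter M N N"
    by (subst XPN) (rule inter_diff_right)
  ultimately have "0 \<le> inter M N N" by simp
  then have "N = zc"
  proof (rule contrapos_pp)
    assume "N \<noteq> zc" then have "inter M N N < 0" by (rule negdef)
    then show "\<not> 0 \<le> inter M N N" by simp
  qed
  show ?thesis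
  proof
    fix i
    have "N i = 0" using \<open>N = zc\<close> by (simp add: zc_def)
    then show "0 \<le> X i" by (simp add: N_def max_def split: if_splits)
  qed
qed

lemma nef_full_support:
  assumes "nefc M D" and "zc < D" shows "\<forall>i. D i \<noteq> 0"
proof (rule ccontr)
  assume "\<not> (\<forall>i. D i \<noteq> 0)"
  then obtain j0 where j0: "D j0 = 0" by blast
  have pos: "\<forall>i. 0 \<le> D i" and ex: "\<exists>i. D i \<noteq> 0" using assms(2) unfolding zc_less_iff by auto
  define S where "S = {i. D i \<noteq> 0}"
  have S1: "S \<noteq> {}" using ex unfolding S_def by auto
  have S2: "S \<noteq> UNIV" using j0 unfolding S_def by auto
  obtain i where i: "i \<in> S" and "\<exists>j. j \<notin> S \<and> M i j \<noteq> 0" using conn[OF S1 S2] by blast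
  then obtain j where j: "j \<notin> S" "M i j \<noteq> 0" by blast
  have ij: "D i \<noteq> 0" "D j = 0" using i j unfolding S_def by auto
  have "i \<noteq> j" using ij by auto
  have Mij: "0 < M i j" using offd[OF \<open>i \<noteq> j\<close>] j(2) by simp
  have Di: "0 < D i" using pos ij(1) by (simp add: order_le_neq_trans)
  have sr: "(\<Sum>k\<in>UNIV. D k * M k j) = D i * M i j + (\<Sum>k\<in>UNIV - {i}. D k * M k j)"
    by (rule sum.remove) auto
  have nn: "0 \<le> (\<Sum>k\<in>UNIV - {i}. D k * M k j)"
  proof (rule sum_nonneg)
    fix k assume "k \<in> UNIV - {i}"
    show "0 \<le> D k * M k j"
    proof (cases "k = j")
      case True then show ?thesis using ij by simp
    next
      case False then show ?thesis using pos offd[OF False] by simp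
    qed
  qed
  have "0 < D i * M i j" using Di Mij by simp
  then have "0 < inter M D (E j)" unfolding inter_E_right sr using nn by linarith
  moreover have "inter M D (E j) \<le> 0" using assms(1) unfolding nefc_def by blast
  ultimately show False by simp
qed

lemma nef_min:
  assumes "nefc M X" "nefc M Y" shows "nefc M (\<lambda>i. min (X i) (Y i))"
  unfolding nefc_def
proof
  fix i
  show "inter M (\<lambda>i. min (X i) (Y i)) (E i) \<le> 0"
  proof (cases "X i \<le> Y i")
    case True
    have "inter M (\<lambda>i. min (X i) (Y i)) (E i) \<le> inter M X (E i)"
      by (rule dot_mono_off) (use True in auto)
    then show ?thesis using assms(1) order_trans unfolding nefc_def by blast
  next
    case False
    have "inter M (\<lambda>i. min (X i) (Y i)) (E i) \<le> inter M Y (E i)"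
      by (rule dot_mono_off) (use False in auto)
    then show ?thesis using assms(2) order_trans unfolding nefc_def by blast
  qed
qed

lemma supp_UNIV: "supp D = UNIV \<longleftrightarrow> (\<forall>i. D i \<noteq> 0)" unfolding supp_def by auto

lemma fund_exists_aux:
  assumes "\<exists>X. \<forall>i. inter M X (E i) < 0"
  shows "\<exists>Z. is_fund_on M UNIV Z"
proof -
  obtain X where X: "\<forall>i. inter M X (E i) < 0" using assms by blast
  have Xnef: "nefc M X" using X unfolding nefc_def by (simp add: less_imp_le)
  have Xpos: "\<forall>i. 0 \<le> X i" using positivity X by (simp add: less_imp_le)
  have "X \<noteq> zc" proof assume "X = zc" then show False using X[rule_format, of undefined] by simp qed
  then have "\<exists>i. X i \<noteq> 0" unfolding zc_def by auto
  then have "zc < X" using Xpos unfolding zc_less_iff by auto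
  define P where "P = {D. zc < D \<and> nefc M D}"
  have "X \<in> P" unfolding P_def using \<open>zc < X\<close> Xnef by simp
  define msr where "msr = (\<lambda>D::'i cycle. nat (\<Sum>i\<in>UNIV. D i))"
  obtain Z where Z: "Z \<in> P" and Zmin: "\<And>D. D \<in> P \<Longrightarrow> msr Z \<le> msr D"
    using ex_has_least_nat[of "\<lambda>D. D \<in> P" X msr] \<open>X \<in> P\<close> by blast
  have ZP: "zc < Z" "nefc M Z" using Z unfolding P_def by auto
  have Zle: "Z \<le> D" if D: "D \<in> P" for D
  proof -
    define m where "m = (\<lambda>i. min (Z i) (D i))"
    have DP: "zc < D" "nefc M D" using D unfolding P_def by auto
    have mnef: "nefc M m" unfolding m_def by (rule nef_min[OF ZP(2) DP(2)])
    have fz: "\<forall>i. Z i \<noteq> 0" by (rule nef_full_support[OF ZP(2) ZP(1)])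
    have fd: "\<forall>i. D i \<noteq> 0" by (rule nef_full_support[OF DP(2) DP(1)])
    have Zp: "\<forall>i. 0 \<le> Z i" and Dp: "\<forall>i. 0 \<le> D i" using ZP DP unfolding zc_less_iff by auto
    have "\<forall>i. 0 < m i" unfolding m_def using Zp Dp fz fd by (simp add: order_le_neq_trans)
    then have "\<forall>i. 0 \<le> m i" "m undefined \<noteq> 0" by (simp_all add: less_imp_le less_imp_neq[symmetric])
    then have "zc < m" unfolding zc_less_iff by blast
    then have "m \<in> P" using mnef unfolding P_def by simp
    then have "msr Z \<le> msr m" by (rule Zmin)
    moreover have "(\<Sum>i\<in>UNIV. m i) \<le> (\<Sum>i\<in>UNIV. Z i)" unfolding m_def by (rule sum_mono) simp
    moreover have "0 \<le> (\<Sum>i\<in>UNIV. m i)" unfolding m_def using Zp Dp by (simp add: sum_nonneg)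
    ultimately have eqs: "(\<Sum>i\<in>UNIV. Z i - m i) = 0" unfolding msr_def by (simp add: sum_subtractf)
    have "\<forall>i\<in>UNIV. Z i - m i = 0"
      using sum_nonneg_eq_0_iff[of UNIV "\<lambda>i. Z i - m i"] eqs unfolding m_def by simp
    show "Z \<le> D" unfolding le_fun_def
    proof
      fix i
      have "Z i = min (Z i) (D i)" using \<open>\<forall>i\<in>UNIV. Z i - m i = 0\<close> unfolding m_def by simp
      then show "Z i \<le> D i" by (metis min.cobounded2)
    qed
  qed
  have "is_fund_on M UNIV Z"
    unfolding is_fund_on_def
  proof (intro conjI allI impI ballI)
    show "zc < Z" by (rule ZP(1))
    show "supp Z = UNIV" unfolding supp_UNIV by (rule nef_full_support[OF ZP(2) ZP(1)])
    fix i show "inter M Z (E i) \<le> 0" using ZP(2) unfolding nefc_def by blast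
  next
    fix D' assume "zc < D' \<and> supp D' = UNIV \<and> (\<forall>i\<in>UNIV. inter M D' (E i) \<le> 0)"
    then show "Z \<le> D'" using Zle unfolding P_def nefc_def by auto
  qed
  then show ?thesis by blast
qed

end

lemma lattice_qf:
  assumes symM: "\<forall>i j. M i j = M j i" and offd: "\<forall>i j. i \<noteq> j \<longrightarrow> 0 \<le> M i j"
  shows "qf M g (\<lambda>x. min (X1 x) (X2 x)) + qf M g (\<lambda>x. max (X1 x) (X2 x)) \<ge> qf M g X1 + qf M g X2"
proof -
  define m where "m = (\<lambda>x. min (X1 x) (X2 x))"
  define U where "U = (\<lambda>x. X1 x - m x)"
  define V where "V = (\<lambda>x. X2 x - m x)"
  have e1: "X1 = (\<lambda>x. m x + U x)" unfolding U_def by simp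
  have e2: "X2 = (\<lambda>x. m x + V x)" unfolding V_def by simp
  have e3: "(\<lambda>x. max (X1 x) (X2 x)) = (\<lambda>x. (m x + U x) + V x)" unfolding U_def V_def m_def
    by (auto simp: min_def max_def)
  have UV: "0 \<le> inter M U V" unfolding inter_def
  proof (intro sum_nonneg)
    fix i j
    show "0 \<le> U i * V j * M i j"
    proof (cases "i = j")
      case True then show ?thesis unfolding U_def V_def m_def by (auto simp: min_def)
    next
      case False
      have "0 \<le> U i" "0 \<le> V j" unfolding U_def V_def m_def by auto
      then show ?thesis using offd False by simp
    qed
  qed
  have "qf M g (\<lambda>x. (m x + U x) + V x) = qf M g m + qf M g U + 2 * inter M m U + qf M g V + 2 * inter M (\<lambda>x. m x + U x) V"
    using qf_add[OF symM, of g "\<lambda>x. m x + U x" V] qf_add[OF symM, of g m U] by simp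
  moreover have "inter M (\<lambda>x. m x + U x) V = inter M m V + inter M U V" by (rule inter_add_left)
  moreover have "qf M g X1 = qf M g m + qf M g U + 2 * inter M m U"
    by (subst e1) (rule qf_add[OF symM])
  moreover have "qf M g X2 = qf M g m + qf M g V + 2 * inter M m V"
    by (subst e2) (rule qf_add[OF symM])
  ultimately show ?thesis using UV e3 unfolding m_def[symmetric] by simp
qed

locale thm_ctx = cfg +
  fixes ds :: "('i::finite) cycle list"
  assumes strict: "\<exists>X. \<forall>i. inter M X (E i) < 0"
    and ppos: "pa M g (fund_cycle M) > 0"
    and Zsq: "inter M (fund_cycle M) (fund_cycle M) = -2"
    and ess: "ess_irreducible M g (fund_cycle M)"
    and yau: "is_yau_seq M g ds"
    and lastZ: "last ds = Zmin M g"
begin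

abbreviation "Z \<equiv> fund_cycle M"
abbreviation "p \<equiv> pa M g (fund_cycle M)"

lemma Zfund: "is_fund_on M UNIV Z"
proof -
  obtain Z0 where Z0: "is_fund_on M UNIV Z0" using fund_exists_aux[OF strict] by blast
  have uniq: "D = Z0" if "is_fund_on M UNIV D" for D
  proof -
    have "D \<le> Z0" using that Z0 unfolding is_fund_on_def by blast
    moreover have "Z0 \<le> D" using that Z0 unfolding is_fund_on_def by blast
    ultimately show "D = Z0" by (rule order.antisym)
  qed
  show ?thesis unfolding fund_cycle_def using Z0 uniq by (rule theI)
qed

lemma Zpos: "zc < Z" and Zsupp: "\<forall>i. Z i \<noteq> 0" and Znef: "\<And>i. inter M Z (E i) \<le> 0"
  and Zminimal: "\<And>D. zc < D \<Longrightarrow> (\<forall>i. D i \<noteq> 0) \<Longrightarrow> (\<forall>i. inter M D (E i) \<le> 0) \<Longrightarrow> Z \<le> D"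
  using Zfund unfolding is_fund_on_def supp_UNIV by auto

lemma Zgt: "0 < Z i"
proof -
  have "0 \<le> Z i" using Zpos unfolding zc_less_iff by blast
  then show ?thesis using Zsupp by (simp add: order_le_neq_trans)
qed

definition A :: 'i where "A = (SOME A. Z A \<noteq> 0 \<and> \<not> minus2_curve M g A \<and>
        (Z = (\<lambda>j. Z A * E A j) \<or> (\<forall>j\<in>supp (\<lambda>j. Z j - Z A * E A j). minus2_curve M g j)))"

lemma A_prop: "Z A \<noteq> 0 \<and> \<not> minus2_curve M g A \<and>
        (Z = (\<lambda>j. Z A * E A j) \<or> (\<forall>j\<in>supp (\<lambda>j. Z j - Z A * E A j). minus2_curve M g j))"
  unfolding A_def using ess unfolding ess_irreducible_def by (rule someI_ex)

lemma other_m2: assumes "j \<noteq> A" shows "minus2_curve M g j"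
proof -
  have EA: "E A j = 0" using assms unfolding E_def by simp
  have Zj: "Z j \<noteq> 0" using Zsupp by blast
  from A_prop have "Z = (\<lambda>j. Z A * E A j) \<or> (\<forall>j\<in>supp (\<lambda>j. Z j - Z A * E A j). minus2_curve M g j)" by blast
  then show ?thesis
  proof
    assume "Z = (\<lambda>j. Z A * E A j)"
    then have "Z j = Z A * E A j" by (rule fun_cong)
    then show ?thesis using EA Zj by simp
  next
    assume h: "\<forall>j\<in>supp (\<lambda>j. Z j - Z A * E A j). minus2_curve M g j"
    have "j \<in> supp (\<lambda>j. Z j - Z A * E A j)" unfolding supp_def using EA Zj by simp
    then show ?thesis using h by blast
  qed
qed

lemma g0: "j \<noteq> A \<Longrightarrow> g j = 0" using other_m2 unfolding minus2_curve_def by blast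
lemma Mjj: "j \<noteq> A \<Longrightarrow> M j j = -2" using other_m2 unfolding minus2_curve_def by blast
lemma canon0: "j \<noteq> A \<Longrightarrow> canon M g j = 0" unfolding canon_def using g0 Mjj by simp

definition kap :: int where "kap = canon M g A"

lemma kap_pos: "1 \<le> kap"
proof -
  have nm2: "\<not> minus2_curve M g A" using A_prop by blast
  have MA: "M A A < 0" by (rule Mii_neg)
  have nm1: "\<not> (g A = 0 \<and> M A A = -1)" using minres unfolding minimal_resolution_def by blast
  show ?thesis
  proof (cases "g A = 0")
    case True
    then have "M A A \<noteq> -2" using nm2 unfolding minus2_curve_def by simp
    moreover have "M A A \<noteq> -1" using nm1 True by simp
    ultimately have "M A A \<le> -3" using MA by simp
    then show ?thesis unfolding kap_def canon_def using True by simp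
  next
    case False
    then show ?thesis unfolding kap_def canon_def using MA by simp
  qed
qed

lemma Kdot_A: "Kdot M g D = D A * kap"
proof -
  have "\<And>i. D i * canon M g i = (if i = A then D A * kap else 0)"
    using canon0 unfolding kap_def by auto
  then show ?thesis unfolding Kdot_def by simp
qed

lemma pa2A: "2 * pa M g D = 2 + inter M D D + D A * kap"
  using pa2[of D] unfolding qf_def Kdot_A by simp

lemma pa_addE: "j \<noteq> A \<Longrightarrow> pa M g (\<lambda>x. D x + E j x) = pa M g D + inter M D (E j) - 1"
  using paadd[of D "E j"] paE[of j] g0[of j] by simp

lemma EE_j: assumes "j \<noteq> A" shows "inter M (E j) (E j) = -2" using inter_EE[of M j j] Mjj[OF assms] by simp

lemma noA_pa: assumes "zc < D" "D A = 0" shows "pa M g D \<le> 0"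
proof -
  have "D \<noteq> zc" using assms(1) by auto
  then have neg: "inter M D D < 0" by (rule negdef)
  have "even (qf M g D)" by (rule qf_even[OF symM])
  moreover have "qf M g D = inter M D D" unfolding qf_def Kdot_A using assms(2) by simp
  ultimately have "inter M D D \<le> -2" using neg by presburger
  then show ?thesis using pa2A[of D] assms(2) by simp
qed

lemma below_strict:
  assumes "\<forall>x. D x \<le> F x" and "inter M F (E i) < inter M D (E i)"
  shows "D i < F i"
proof -
  have "0 < F i - D i"
  proof (rule dot_neg_pos)
    show "\<forall>j. 0 \<le> F j - D j" using assms(1) by simp
    show "inter M (\<lambda>x. F x - D x) (E i) < 0" using assms(2) inter_diff_left[of M F D "E i"] by simp
  qed
  then show ?thesis by simp
qed

lemma measure_lemma:
  fixes D F :: "'i cycle"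
  assumes "D \<le> F" "D \<noteq> F"
  shows "(\<Sum>x\<in>UNIV. D x) < (\<Sum>x\<in>UNIV. F x)"
proof -
  have "\<forall>x. D x \<le> F x" using assms(1) unfolding le_fun_def by blast
  moreover obtain y where "D y \<noteq> F y" using assms(2) by blast
  ultimately have "D y < F y" by (simp add: order_le_neq_trans)
  then show ?thesis using \<open>\<forall>x. D x \<le> F x\<close> by (intro sum_strict_mono_ex1) auto
qed

lemma pa_bound_aux:
  "\<forall>D. nat (\<Sum>x\<in>UNIV. Z x - D x) = n \<longrightarrow> zc < D \<longrightarrow> D \<le> Z \<longrightarrow> pa M g D \<le> p"
proof (induction n rule: less_induct)
  case (less n)
  show ?case
  proof (intro allI impI)
    fix D :: "'i cycle"
    assume n: "nat (\<Sum>x\<in>UNIV. Z x - D x) = n" and D0: "zc < D" and DZ: "D \<le> Z"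
    have DZ': "\<forall>x. D x \<le> Z x" using DZ unfolding le_fun_def by blast
    have Dnn: "\<forall>x. 0 \<le> D x" using D0 unfolding zc_less_iff by blast
    show "pa M g D \<le> p"
    proof (cases "\<exists>i. 0 < inter M D (E i)")
      case True
      then obtain i where i: "0 < inter M D (E i)" by blast
      have "D i < Z i" using below_strict[OF DZ'] i Znef[of i] by simp
      define D' where "D' = (\<lambda>x. D x + E i x)"
      have D'Z: "D' \<le> Z" unfolding le_fun_def D'_def E_def using DZ' \<open>D i < Z i\<close> by auto
      have "\<forall>x. 0 \<le> D' x" unfolding D'_def E_def using Dnn by simp
      moreover have "D' i \<noteq> 0" unfolding D'_def E_def using Dnn by (simp add: add_nonneg_pos[THEN less_imp_neq[symmetric]] le_less)
      ultimately have D'0: "zc < D'" unfolding zc_less_iff by blast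
      have sm: "(\<Sum>x\<in>UNIV. Z x - D' x) = (\<Sum>x\<in>UNIV. Z x - D x) - 1"
      proof -
        have "(\<Sum>x\<in>UNIV. Z x - D' x) = (\<Sum>x\<in>UNIV. (Z x - D x) - E i x)" unfolding D'_def by (simp add: algebra_simps)
        also have "\<dots> = (\<Sum>x\<in>UNIV. Z x - D x) - (\<Sum>x\<in>UNIV. E i x)" by (simp add: sum_subtractf)
        also have "(\<Sum>x\<in>UNIV. E i x) = 1" unfolding E_def by simp
        finally show ?thesis .
      qed
      have "0 \<le> (\<Sum>x\<in>UNIV. Z x - D' x)" using D'Z unfolding le_fun_def by (simp add: sum_nonneg)
      then have lt: "nat (\<Sum>x\<in>UNIV. Z x - D' x) < n" using n sm by simp
      have "pa M g D' \<le> p" using less.IH[OF lt] D'0 D'Z by blast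
      moreover have "pa M g D' = pa M g D + int (g i) + inter M D (E i) - 1"
        unfolding D'_def using paadd[of D "E i"] paE[of i] by simp
      ultimately show ?thesis using i by simp
    next
      case False
      then have nef: "\<forall>i. inter M D (E i) \<le> 0" by (simp add: not_less)
      have "\<forall>i. D i \<noteq> 0" using nef_full_support[OF _ D0] nef unfolding nefc_def by blast
      then have "Z \<le> D" using Zminimal[OF D0] nef by blast
      then have "D = Z" using DZ by simp
      then show ?thesis by simp
    qed
  qed
qed

lemma pa_bound: "zc < D \<Longrightarrow> D \<le> Z \<Longrightarrow> pa M g D \<le> p"
  using pa_bound_aux by blast

end

context thm_ctx begin

lemma pa_lattice:
  "pa M g (\<lambda>x. min (X1 x) (X2 x)) + pa M g (\<lambda>x. max (X1 x) (X2 x)) \<ge> pa M g X1 + pa M g X2"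
proof -
  have o: "\<forall>i j. i \<noteq> j \<longrightarrow> 0 \<le> M i j" using offd by blast
  have "qf M g (\<lambda>x. min (X1 x) (X2 x)) + qf M g (\<lambda>x. max (X1 x) (X2 x)) \<ge> qf M g X1 + qf M g X2"
    by (rule lattice_qf[OF symM o])
  then show ?thesis using pa2[of X1] pa2[of X2] pa2[of "\<lambda>x. min (X1 x) (X2 x)"] pa2[of "\<lambda>x. max (X1 x) (X2 x)"]
    by simp
qed

lemma pp: "0 < p" using ppos .

lemma hasA: assumes "zc < D" "pa M g D = p" shows "0 < D A"
proof -
  have "D A \<noteq> 0" using noA_pa[OF assms(1)] assms(2) pp by auto
  moreover have "0 \<le> D A" using assms(1) unfolding zc_less_iff by blast
  ultimately show ?thesis by simp
qed

lemma nonneg_of: "zc < D \<Longrightarrow> 0 \<le> D x" unfolding zc_less_iff by blast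

lemma zc_less_of: assumes "\<forall>x. 0 \<le> D x" "0 < D y" shows "zc < D"
  unfolding zc_less_iff using assms by (metis less_irrefl)

lemma le_trans_fun: "(X::'i cycle) \<le> Y \<Longrightarrow> Y \<le> W \<Longrightarrow> X \<le> W" by (rule order_trans)

lemma min_genus_exists: "\<exists>D. is_min_genus_cycle M g D"
proof -
  define P where "P = {D. zc < D \<and> D \<le> Z \<and> pa M g D = p}"
  have "Z \<in> P" unfolding P_def using Zpos by simp
  define msr where "msr = (\<lambda>D::'i cycle. nat (\<Sum>i\<in>UNIV. D i))"
  obtain D0 where D0: "D0 \<in> P" and D0m: "\<And>D. D \<in> P \<Longrightarrow> msr D0 \<le> msr D"
    using ex_has_least_nat[of "\<lambda>D. D \<in> P" Z msr] \<open>Z \<in> P\<close> by blast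
  have "is_min_genus_cycle M g D0" unfolding is_min_genus_cycle_def
  proof (intro conjI allI impI)
    show "zc < D0" "D0 \<le> Z" "pa M g D0 = p" using D0 unfolding P_def by auto
  next
    fix D' assume h: "zc < D' \<and> D' \<le> D0 \<and> pa M g D' = p"
    have "D0 \<le> Z" using D0 unfolding P_def by auto
    then have "D' \<in> P" unfolding P_def using h order_trans by blast
    then have m: "msr D0 \<le> msr D'" by (rule D0m)
    show "D' = D0"
    proof (rule ccontr)
      assume "D' \<noteq> D0"
      then have lt: "(\<Sum>x\<in>UNIV. D' x) < (\<Sum>x\<in>UNIV. D0 x)" using measure_lemma h by blast
      have "zc < D'" using h by blast
      then have "\<forall>x. 0 \<le> D' x" unfolding zc_less_iff by blast
      then have "0 \<le> (\<Sum>x\<in>UNIV. D' x)" by (simp add: sum_nonneg)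
      then show False using m lt unfolding msr_def by simp
    qed
  qed
  then show ?thesis by blast
qed

lemma min_genus_unique:
  assumes D1: "is_min_genus_cycle M g D1" and D2: "is_min_genus_cycle M g D2"
  shows "D1 = D2"
proof -
  have d1: "zc < D1" "D1 \<le> Z" "pa M g D1 = p" and d1m: "\<And>D'. zc < D' \<Longrightarrow> D' \<le> D1 \<Longrightarrow> pa M g D' = p \<Longrightarrow> D' = D1"
    using D1 unfolding is_min_genus_cycle_def by auto
  have d2: "zc < D2" "D2 \<le> Z" "pa M g D2 = p" and d2m: "\<And>D'. zc < D' \<Longrightarrow> D' \<le> D2 \<Longrightarrow> pa M g D' = p \<Longrightarrow> D' = D2"
    using D2 unfolding is_min_genus_cycle_def by auto
  define mn where "mn = (\<lambda>x. min (D1 x) (D2 x))"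
  define mx where "mx = (\<lambda>x. max (D1 x) (D2 x))"
  have a1: "0 < D1 A" by (rule hasA[OF d1(1) d1(3)])
  have a2: "0 < D2 A" by (rule hasA[OF d2(1) d2(3)])
  have mn0: "zc < mn" unfolding mn_def using a1 a2 nonneg_of[OF d1(1)] nonneg_of[OF d2(1)]
    by (intro zc_less_of[where y=A]) auto
  have mx0: "zc < mx" unfolding mx_def using a1 nonneg_of[OF d1(1)] nonneg_of[OF d2(1)]
    by (intro zc_less_of[where y=A]) (auto simp: max_def)
  have mnle1: "mn \<le> D1" unfolding mn_def le_fun_def by simp
  have mnle2: "mn \<le> D2" unfolding mn_def le_fun_def by simp
  have mnZ: "mn \<le> Z" using mnle1 d1(2) by (rule order_trans)
  have mxZ: "mx \<le> Z" using d1(2) d2(2) unfolding mx_def le_fun_def by simp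
  have "pa M g mn + pa M g mx \<ge> 2 * p" using pa_lattice[of D1 D2] d1 d2 unfolding mn_def mx_def by simp
  moreover have "pa M g mn \<le> p" by (rule pa_bound[OF mn0 mnZ])
  moreover have "pa M g mx \<le> p" by (rule pa_bound[OF mx0 mxZ])
  ultimately have "pa M g mn = p" by simp
  then have "mn = D1" "mn = D2" using d1m[OF mn0 mnle1] d2m[OF mn0 mnle2] by auto
  then show ?thesis by simp
qed

abbreviation "Zm \<equiv> Zmin M g"

lemma Zm_prop: "is_min_genus_cycle M g Zm"
proof -
  obtain D where D: "is_min_genus_cycle M g D" using min_genus_exists by blast
  show ?thesis unfolding Zmin_def by (rule theI[of _ D]) (use D min_genus_unique in auto)
qed

lemma Zm0: "zc < Zm" and ZmZ: "Zm \<le> Z" and paZm: "pa M g Zm = p"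
  and Zmmin: "\<And>D'. zc < D' \<Longrightarrow> D' \<le> Zm \<Longrightarrow> pa M g D' = p \<Longrightarrow> D' = Zm"
  using Zm_prop unfolding is_min_genus_cycle_def by auto

lemma ZmA: "0 < Zm A" by (rule hasA[OF Zm0 paZm])

abbreviation "nn \<equiv> length ds"
abbreviation "Dk k \<equiv> ds ! k"

lemma ds_ne: "ds \<noteq> []" and D0Z: "Dk 0 = Z"
  and tyu: "\<And>k. Suc k < nn \<Longrightarrow> is_tyurina M g (Dk k) (Dk (Suc k))"
  and ntZm: "\<And>k. Suc k < nn \<Longrightarrow> num_trivial M (Dk k) Zm"
  using yau unfolding is_yau_seq_def by auto

lemma last_dot: "inter M (last ds) Zm < 0" using yau unfolding is_yau_seq_def by blast

lemma nn_pos: "0 < nn" using ds_ne by simp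

lemma last_Zm: "Dk (nn - 1) = Zm" using lastZ ds_ne by (simp add: last_conv_nth)

lemma tyuD: assumes "Suc k < nn"
  shows "zc < Dk (Suc k)" "Dk (Suc k) < Dk k" "num_trivial M (Dk k) (Dk (Suc k))"
    "pa M g (Dk (Suc k)) = pa M g (Dk k)"
    "\<And>D''. zc < D'' \<Longrightarrow> D'' < Dk k \<Longrightarrow> num_trivial M (Dk k) D'' \<Longrightarrow> pa M g D'' = pa M g (Dk k) \<Longrightarrow> D'' \<le> Dk (Suc k)"
  using tyu[OF assms] unfolding is_tyurina_def by auto

lemma chain_basic: "k < nn \<Longrightarrow> zc < Dk k \<and> Dk k \<le> Z \<and> pa M g (Dk k) = p"
proof (induction k)
  case 0 then show ?case using D0Z Zpos by simp
next
  case (Suc k)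
  then have IH: "zc < Dk k \<and> Dk k \<le> Z \<and> pa M g (Dk k) = p" by simp
  have "Dk (Suc k) \<le> Z" using tyuD(2)[OF Suc.prems] IH order_trans less_imp_le by blast
  then show ?case using tyuD(1,4)[OF Suc.prems] IH by simp
qed

lemma Dk0: "k < nn \<Longrightarrow> zc < Dk k" and DkZ: "k < nn \<Longrightarrow> Dk k \<le> Z" and paDk: "k < nn \<Longrightarrow> pa M g (Dk k) = p"
  using chain_basic by auto

lemma chain_mono: "k \<le> j \<Longrightarrow> j < nn \<Longrightarrow> Dk j \<le> Dk k"
proof (induction j)
  case 0 then show ?case by simp
next
  case (Suc j)
  show ?case
  proof (cases "k = Suc j")
    case True then show ?thesis by simp
  next
    case False
    then have "k \<le> j" using Suc.prems by simp
    then have "Dk j \<le> Dk k" using Suc by simp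
    moreover have "Dk (Suc j) \<le> Dk j" using tyuD(2)[OF Suc.prems(2)] by simp
    ultimately show ?thesis by simp
  qed
qed

lemma Zm_le: "k < nn \<Longrightarrow> Zm \<le> Dk k"
  using chain_mono[of k "nn - 1"] last_Zm by simp

lemma supp_mono: assumes "zc < X" "X \<le> Y" "X i \<noteq> 0" shows "Y i \<noteq> 0"
proof -
  have "0 \<le> X i" using nonneg_of[OF assms(1)] .
  moreover have "X i \<le> Y i" using assms(2) unfolding le_fun_def by blast
  ultimately show ?thesis using assms(3) by simp
qed

lemma triv_later: assumes "k < j" "j < nn" "Dk j i \<noteq> 0" shows "inter M (Dk k) (E i) = 0"
proof -
  have sk: "Suc k < nn" using assms by simp
  have "Dk j \<le> Dk (Suc k)" using chain_mono[of "Suc k" j] assms by simp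
  then have "Dk (Suc k) i \<noteq> 0" using supp_mono[OF Dk0[OF assms(2)]] assms(3) by blast
  then show ?thesis using tyuD(3)[OF sk] unfolding num_trivial_def supp_def by blast
qed

lemma orth: assumes "k < j" "j < nn" shows "inter M (Dk k) (Dk j) = 0"
proof -
  have "inter M (Dk j) (Dk k) = (\<Sum>i\<in>UNIV. Dk j i * inter M (Dk k) (E i))" by (rule idot)
  also have "\<dots> = 0"
  proof (rule sum.neutral, rule ballI)
    fix i
    show "Dk j i * inter M (Dk k) (E i) = 0"
      using triv_later[OF assms, of i] by (cases "Dk j i = 0") auto
  qed
  finally show ?thesis using isym by metis
qed

lemma dotA0: assumes "Suc k < nn" shows "inter M (Dk k) (E A) = 0"
  using ntZm[OF assms] ZmA unfolding num_trivial_def supp_def by simp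

lemma Dk_nef: assumes "k < nn" "Dk k i \<noteq> 0" shows "inter M (Dk k) (E i) \<le> 0"
proof (cases k)
  case 0 then show ?thesis using D0Z Znef by simp
next
  case (Suc k')
  have sk: "Suc k' < nn" using assms Suc by simp
  let ?D = "Dk k'" and ?D' = "Dk (Suc k')"
  have D'i: "?D' i \<noteq> 0" using assms Suc by simp
  show ?thesis
  proof (rule ccontr)
    assume "\<not> ?thesis"
    then have pos: "0 < inter M ?D' (E i)" using Suc by simp
    have Di0: "inter M ?D (E i) = 0" using tyuD(3)[OF sk] D'i unfolding num_trivial_def supp_def by blast
    have DD': "\<forall>x. ?D' x \<le> ?D x" using tyuD(2)[OF sk] unfolding less_fun_def le_fun_def by blast
    have "?D' i < ?D i" using below_strict[OF DD', of i] pos Di0 by simp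
    define D'' where "D'' = (\<lambda>x. ?D' x + E i x)"
    have D''le: "D'' \<le> ?D" unfolding D''_def le_fun_def E_def using DD' \<open>?D' i < ?D i\<close> by auto
    have D'0: "zc < ?D'" by (rule tyuD(1)[OF sk])
    have "\<forall>x. 0 \<le> D'' x" unfolding D''_def E_def using nonneg_of[OF D'0] by simp
    moreover have "0 < D'' i" unfolding D''_def E_def using nonneg_of[OF D'0, of i] D'i by simp
    ultimately have D''0: "zc < D''" by (rule zc_less_of)
    have D''Z: "D'' \<le> Z" using D''le DkZ[of k'] sk order_trans by simp
    have paD'': "pa M g D'' = pa M g ?D' + int (g i) + inter M ?D' (E i) - 1"
      unfolding D''_def using paadd[of ?D' "E i"] paE[of i] by simp
    have paD': "pa M g ?D' = p" using paDk sk by simp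
    have "pa M g D'' \<le> p" by (rule pa_bound[OF D''0 D''Z])
    then have gi: "g i = 0" and d1: "inter M ?D' (E i) = 1" using paD'' paD' pos by auto
    have ne: "D'' \<noteq> ?D"
    proof
      assume "D'' = ?D"
      then have "inter M ?D (E i) = inter M ?D' (E i) + M i i"
        unfolding D''_def using inter_add_left[of M ?D' "E i" "E i"] inter_EE[of M i i] by simp
      then have "M i i = -1" using Di0 d1 by simp
      then show False using minres gi unfolding minimal_resolution_def by blast
    qed
    have lt: "D'' < ?D" using D''le ne by simp
    have nt: "num_trivial M ?D D''"
      unfolding num_trivial_def
    proof
      fix x assume "x \<in> supp D''"
      then have "D'' x \<noteq> 0" unfolding supp_def by simp
      then have "?D' x \<noteq> 0" unfolding D''_def E_def using D'i by (cases "x = i") auto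
      then show "inter M ?D (E x) = 0" using tyuD(3)[OF sk] unfolding num_trivial_def supp_def by blast
    qed
    have paeq: "pa M g D'' = pa M g ?D" using paD'' paD' d1 gi paDk[of k'] sk by simp
    have "D'' \<le> ?D'" by (rule tyuD(5)[OF sk D''0 lt nt paeq])
    then have "D'' i \<le> ?D' i" unfolding le_fun_def by blast
    then show False unfolding D''_def E_def by simp
  qed
qed

end

context thm_ctx begin

lemma sub_E_pa:
  assumes "j \<noteq> A" "zc < D" "D j \<noteq> 0" "0 < D A"
  shows "zc < (\<lambda>x. D x - E j x)" "pa M g (\<lambda>x. D x - E j x) = pa M g D - inter M D (E j) - 1"
proof -
  let ?X = "\<lambda>x. D x - E j x"
  have nn: "\<forall>x. 0 \<le> ?X x"
  proof
    fix x show "0 \<le> ?X x" using nonneg_of[OF assms(2), of x] assms(3) unfolding E_def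
      by (cases "x = j") auto
  qed
  have "0 < ?X A" using assms(1,4) unfolding E_def by simp
  then show "zc < ?X" using nn by (intro zc_less_of) auto
  have eq: "D = (\<lambda>x. ?X x + E j x)" by simp
  have "pa M g D = pa M g ?X + inter M ?X (E j) - 1"
    by (subst eq) (rule pa_addE[OF assms(1)])
  moreover have "inter M ?X (E j) = inter M D (E j) + 2"
    using inter_diff_left[of M D "E j" "E j"] EE_j[OF assms(1)] by simp
  ultimately show "pa M g ?X = pa M g D - inter M D (E j) - 1" by simp
qed

lemma dot_ge_m1:
  assumes "j \<noteq> A" "zc < D" "D \<le> Z" "D j \<noteq> 0" "pa M g D = p"
  shows "-1 \<le> inter M D (E j)"
proof -
  have DA: "0 < D A" by (rule hasA[OF assms(2,5)])
  note s = sub_E_pa[OF assms(1,2,4) DA]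
  have "(\<lambda>x. D x - E j x) \<le> D" unfolding le_fun_def E_def by simp
  then have "(\<lambda>x. D x - E j x) \<le> Z" using assms(3) by (rule order_trans)
  then have "pa M g (\<lambda>x. D x - E j x) \<le> p" by (rule pa_bound[OF s(1)])
  then show ?thesis using s(2) assms(5) by simp
qed

lemma Zm_dot0: assumes "j \<noteq> A" "Zm j \<noteq> 0" shows "inter M Zm (E j) = 0"
proof -
  note s = sub_E_pa[OF assms(1) Zm0 assms(2) ZmA]
  have le: "(\<lambda>x. Zm x - E j x) \<le> Zm" unfolding le_fun_def E_def by simp
  have ge: "0 \<le> inter M Zm (E j)"
  proof (rule ccontr)
    assume "\<not> ?thesis"
    then have "p \<le> pa M g (\<lambda>x. Zm x - E j x)" using s(2) paZm by simp
    moreover have "pa M g (\<lambda>x. Zm x - E j x) \<le> p" using le ZmZ order_trans pa_bound[OF s(1)] by blast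
    ultimately have "pa M g (\<lambda>x. Zm x - E j x) = p" by simp
    then have "(\<lambda>x. Zm x - E j x) = Zm" by (rule Zmmin[OF s(1) le])
    then have "Zm j - E j j = Zm j" by (rule fun_cong)
    then show False unfolding E_def by simp
  qed
  have "inter M (Dk (nn - 1)) (E j) \<le> 0" using Dk_nef[of "nn - 1" j] nn_pos last_Zm assms(2) by simp
  then show ?thesis using ge last_Zm by simp
qed

lemma sq_formula: "zc < D \<Longrightarrow> pa M g D = p \<Longrightarrow> inter M D D = 2 * p - 2 - D A * kap"
  using pa2A[of D] by simp

lemma Z_formula: "2 * p = Z A * kap" using pa2A[of Z] Zsq by simp

lemma Zm_sq: "inter M Zm Zm = Zm A * inter M Zm (E A)"
proof -
  have "inter M Zm Zm = (\<Sum>i\<in>UNIV. Zm i * inter M Zm (E i))" by (rule idot)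
  also have "\<dots> = (\<Sum>i\<in>UNIV. if i = A then Zm A * inter M Zm (E A) else 0)"
  proof (rule sum.cong)
    fix i show "Zm i * inter M Zm (E i) = (if i = A then Zm A * inter M Zm (E A) else 0)"
      using Zm_dot0[of i] by (cases "i = A"; cases "Zm i = 0") auto
  qed simp
  finally show ?thesis by simp
qed

lemma ZA_pos: "0 < Z A" by (rule Zgt)

lemma ZmA_le: "Zm A \<le> Z A" using ZmZ unfolding le_fun_def by blast

lemma key_A: "Z A * inter M Zm (E A) = -2"
  and key_A_drop: "Zm A < Z A \<Longrightarrow> kap = 1 \<and> Zm A = 1 \<and> Z A = 2 \<and> inter M Zm (E A) = -1 \<and> p = 1"
proof -
  define a where "a = Z A"
  define am where "am = Zm A"
  define t where "t = - inter M Zm (E A)"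
  have neg: "inter M Zm Zm < 0" using negdef Zm0 by auto
  have s1: "inter M Zm Zm = - am * t" unfolding am_def t_def using Zm_sq by simp
  have s2: "inter M Zm Zm = a * kap - 2 - am * kap" unfolding a_def am_def
    using sq_formula[OF Zm0 paZm] Z_formula by simp
  have amp: "0 < am" unfolding am_def by (rule ZmA)
  have ama: "am \<le> a" unfolding am_def a_def by (rule ZmA_le)
  have k1: "1 \<le> kap" by (rule kap_pos)
  have st: "am * t = 2 - kap * (a - am)" using s1 s2 by (simp add: algebra_simps)
  have st1: "1 \<le> am * t" using s1 neg by simp
  have "a * (- t) = -2 \<and> (am < a \<longrightarrow> kap = 1 \<and> am = 1 \<and> a = 2 \<and> t = 1 \<and> p = 1)"
  proof (cases "am = a")
    case True then show ?thesis using st by simp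
  next
    case False
    then have lt: "am < a" using ama by simp
    then have "1 \<le> a - am" by simp
    then have "1 \<le> kap * (a - am)" using k1 by (metis mult_le_cancel_left1 order.trans zero_less_one order_le_less_trans less_imp_le mult_1_left mult_mono zero_le_one)
    then have e1: "kap * (a - am) = 1" and e2: "am * t = 1" using st st1 by auto
    have "kap = 1 \<and> a - am = 1" using e1 k1 by (simp add: zmult_eq_1_iff)
    moreover have "am = 1 \<and> t = 1" using e2 amp by (simp add: zmult_eq_1_iff)
    moreover have "2 * p = a * kap" unfolding a_def by (rule Z_formula)
    ultimately show ?thesis using lt by auto
  qed
  then show "Z A * inter M Zm (E A) = -2" "Zm A < Z A \<Longrightarrow> kap = 1 \<and> Zm A = 1 \<and> Z A = 2 \<and> inter M Zm (E A) = -1 \<and> p = 1"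
    unfolding a_def am_def t_def by auto
qed

lemma elliptic_aux:
  assumes p1: "p = 1"
  shows "\<forall>X. nat (\<Sum>x\<in>UNIV. X x) = n \<longrightarrow> zc < X \<longrightarrow> pa M g X \<le> 1"
proof (induction n rule: less_induct)
  case (less n)
  show ?case
  proof (intro allI impI)
    fix X :: "'i cycle"
    assume n: "nat (\<Sum>x\<in>UNIV. X x) = n" and X0: "zc < X"
    define mn where "mn = (\<lambda>x. min (X x) (Z x))"
    define mx where "mx = (\<lambda>x. max (X x) (Z x))"
    have Xnn: "\<forall>x. 0 \<le> X x" using X0 unfolding zc_less_iff by blast
    obtain y where y: "X y \<noteq> 0" using X0 unfolding zc_less_iff by blast
    have Xy: "0 < X y" using Xnn y by (simp add: order_le_neq_trans)
    have Zp: "\<forall>x. 0 < Z x" using Zgt by blast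
    have mn0: "zc < mn" unfolding mn_def using Xnn Zp Xy
      by (intro zc_less_of[where y=y]) (auto simp: less_imp_le)
    have mnZ: "mn \<le> Z" unfolding mn_def le_fun_def by simp
    have pamn: "pa M g mn \<le> 1" using pa_bound[OF mn0 mnZ] p1 by simp
    show "pa M g X \<le> 1"
    proof (cases "X \<le> Z")
      case True then show ?thesis using pa_bound[OF X0] p1 by simp
    next
      case False
      define W where "W = (\<lambda>x. X x - mn x)"
      have Wnn: "\<forall>x. 0 \<le> W x" unfolding W_def mn_def by simp
      obtain y2 where "\<not> X y2 \<le> Z y2" using False unfolding le_fun_def by blast
      then have "0 < W y2" unfolding W_def mn_def by simp
      then have W0: "zc < W" using Wnn by (intro zc_less_of[where y=y2]) auto
      have mxe: "mx = (\<lambda>x. Z x + W x)" unfolding mx_def W_def mn_def by (auto simp: min_def max_def)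
      have "pa M g mx = pa M g Z + pa M g W + inter M Z W - 1" unfolding mxe by (rule paadd)
      moreover have "inter M Z W \<le> 0"
      proof -
        have "inter M W Z = (\<Sum>i\<in>UNIV. W i * inter M Z (E i))" by (rule idot)
        also have "\<dots> \<le> 0" using Wnn Znef by (intro sum_nonpos) (simp add: mult_nonneg_nonpos)
        finally show ?thesis using isym by metis
      qed
      moreover have "pa M g W \<le> 1"
      proof -
        have sW: "(\<Sum>x\<in>UNIV. W x) = (\<Sum>x\<in>UNIV. X x) - (\<Sum>x\<in>UNIV. mn x)" unfolding W_def by (simp add: sum_subtractf)
        have "0 < (\<Sum>x\<in>UNIV. mn x)"
        proof -
          have "\<forall>x. 0 \<le> mn x" using mn0 unfolding zc_less_iff by blast
          moreover have "0 < mn y" unfolding mn_def using Xy Zp by simp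
          ultimately show ?thesis by (intro sum_pos2[where i=y]) auto
        qed
        moreover have "0 \<le> (\<Sum>x\<in>UNIV. W x)" using Wnn by (simp add: sum_nonneg)
        ultimately have "nat (\<Sum>x\<in>UNIV. W x) < n" using n sW by simp
        then show ?thesis using less.IH W0 by blast
      qed
      ultimately have "pa M g mx \<le> 1" using p1 by simp
      moreover have "pa M g mn + pa M g mx \<ge> pa M g X + pa M g Z" unfolding mn_def mx_def by (rule pa_lattice)
      ultimately show ?thesis using pamn p1 by simp
    qed
  qed
qed

lemma elliptic_bound: "p = 1 \<Longrightarrow> zc < X \<Longrightarrow> pa M g X \<le> 1"
  using elliptic_aux by blast

end

context thm_ctx begin

lemma DkA: "k < nn \<Longrightarrow> 0 < Dk k A" using hasA[OF Dk0 paDk] by blast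

lemma add_E_facts:
  assumes sk: "Suc k < nn" and D'i: "Dk (Suc k) i = 0" and Di: "Dk k i \<noteq> 0"
  shows "i \<noteq> A" "(\<lambda>x. Dk (Suc k) x + E i x) \<le> Dk k" "zc < (\<lambda>x. Dk (Suc k) x + E i x)"
    "pa M g (\<lambda>x. Dk (Suc k) x + E i x) = p + inter M (Dk (Suc k)) (E i) - 1"
    "0 \<le> inter M (Dk (Suc k)) (E i)"
proof -
  let ?D = "Dk k" and ?D' = "Dk (Suc k)"
  have k: "k < nn" using sk by simp
  show iA: "i \<noteq> A" using DkA[OF sk] D'i by auto
  have DD': "\<forall>x. ?D' x \<le> ?D x" using tyuD(2)[OF sk] unfolding less_fun_def le_fun_def by blast
  have "0 < ?D i" using nonneg_of[OF Dk0[OF k], of i] Di by simp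
  then show "(\<lambda>x. ?D' x + E i x) \<le> ?D" unfolding le_fun_def E_def using DD' D'i by auto
  have "\<forall>x. 0 \<le> ?D' x + E i x" using nonneg_of[OF Dk0[OF sk]] unfolding E_def by simp
  moreover have "0 < ?D' i + E i i" using D'i unfolding E_def by simp
  ultimately show "zc < (\<lambda>x. ?D' x + E i x)" by (rule zc_less_of)
  show "pa M g (\<lambda>x. ?D' x + E i x) = p + inter M ?D' (E i) - 1"
    using pa_addE[OF iA, of ?D'] paDk[OF sk] by simp
  show "0 \<le> inter M ?D' (E i)"
    using dot_outside_nonneg[of ?D' i] nonneg_of[OF Dk0[OF sk]] D'i by blast
qed

lemma add_E_le1:
  assumes sk: "Suc k < nn" and D'i: "Dk (Suc k) i = 0" and Di: "Dk k i \<noteq> 0"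
  shows "inter M (Dk (Suc k)) (E i) \<le> 1"
proof -
  note f = add_E_facts[OF assms]
  have "(\<lambda>x. Dk (Suc k) x + E i x) \<le> Z" using f(2) DkZ[of k] sk order_trans by simp
  then have "pa M g (\<lambda>x. Dk (Suc k) x + E i x) \<le> p" by (rule pa_bound[OF f(3)])
  then show ?thesis using f(4) by simp
qed

lemma max_arg:
  assumes sk: "Suc k < nn" and D'i: "Dk (Suc k) i = 0" and Di: "Dk k i \<noteq> 0"
    and z: "inter M (Dk k) (E i) = 0"
  shows "inter M (Dk (Suc k)) (E i) = 0"
proof (rule ccontr)
  let ?D = "Dk k" and ?D' = "Dk (Suc k)"
  define D'' where "D'' = (\<lambda>x. ?D' x + E i x)"
  note f = add_E_facts[OF assms(1-3), folded D''_def]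
  assume "\<not> ?thesis"
  then have d1: "inter M ?D' (E i) = 1" using f(5) add_E_le1[OF assms(1-3)] by simp
  have ne: "D'' \<noteq> ?D"
  proof
    assume h: "D'' = ?D"
    have "inter M D'' (E i) = inter M ?D' (E i) + inter M (E i) (E i)"
      unfolding D''_def by (rule inter_add_left)
    then have "inter M ?D (E i) = inter M ?D' (E i) + inter M (E i) (E i)" using h by simp
    then show False using d1 z EE_j[OF f(1)] by simp
  qed
  have lt: "D'' < ?D" using f(2) ne by simp
  have nt: "num_trivial M ?D D''"
    unfolding num_trivial_def
  proof
    fix x assume "x \<in> supp D''"
    then have "D'' x \<noteq> 0" unfolding supp_def by simp
    show "inter M ?D (E x) = 0"
    proof (cases "x = i")
      case True then show ?thesis using z by simp
    next
      case False
      then have "?D' x \<noteq> 0" using \<open>D'' x \<noteq> 0\<close> unfolding D''_def E_def by simp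
      then show ?thesis using tyuD(3)[OF sk] unfolding num_trivial_def supp_def by blast
    qed
  qed
  have paeq: "pa M g D'' = pa M g ?D" using f(4) d1 paDk[of k] sk by simp
  have "D'' \<le> ?D'" by (rule tyuD(5)[OF sk f(3) lt nt paeq])
  then have "D'' i \<le> ?D' i" unfolding le_fun_def by blast
  then show False unfolding D''_def E_def using D'i by simp
qed

end

context thm_ctx begin

lemma counting:
  assumes sk: "Suc k < nn" and jA: "j \<noteq> A" and Dj: "Dk k j \<noteq> 0" and D'j: "Dk (Suc k) j = 0"
    and dj: "inter M (Dk k) (E j) = -1"
  shows "1 \<le> inter M (Dk (Suc k)) (E j)"
proof (rule ccontr)
  let ?D = "Dk k" and ?D' = "Dk (Suc k)"
  have k: "k < nn" using sk by simp
  assume "\<not> ?thesis"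
  then have d'j: "inter M ?D' (E j) = 0" using add_E_facts(5)[OF sk D'j Dj] by simp
  define C where "C = (\<lambda>x. ?D x - ?D' x)"
  have DD': "\<forall>x. ?D' x \<le> ?D x" using tyuD(2)[OF sk] unfolding less_fun_def le_fun_def by blast
  have Cnn: "\<forall>x. 0 \<le> C x" unfolding C_def using DD' by simp
  have D'A: "?D' A \<noteq> 0" using DkA[OF sk] by simp
  have tb1: "C i * inter M ?D' (E i) \<le> 0" if "?D' i \<noteq> 0" for i
    using Dk_nef[OF sk that] Cnn by (simp add: mult_nonneg_nonpos)
  have tb2: "?D i * (inter M ?D' (E i) + inter M ?D (E i)) \<le> (if i = j then - ?D j else 0)"
    if "?D' i = 0" for i
  proof (cases "?D i = 0")
    case True
    then have "i \<noteq> j" using Dj by auto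
    then show ?thesis using True by simp
  next
    case False
    have iA: "i \<noteq> A" using add_E_facts(1)[OF sk that False] .
    have le0: "inter M ?D (E i) \<le> 0" by (rule Dk_nef[OF k False])
    have ge: "-1 \<le> inter M ?D (E i)" by (rule dot_ge_m1[OF iA Dk0[OF k] DkZ[OF k] False paDk[OF k]])
    have le1: "inter M ?D' (E i) \<le> 1" by (rule add_E_le1[OF sk that False])
    have Dip: "0 \<le> ?D i" using nonneg_of[OF Dk0[OF k]] .
    show ?thesis
    proof (cases "i = j")
      case True then show ?thesis using d'j dj by simp
    next
      case ij: False
      have "inter M ?D' (E i) + inter M ?D (E i) \<le> 0"
      proof (cases "inter M ?D (E i) = 0")
        case True then show ?thesis using max_arg[OF sk that False True] by simp
      next
        case False then show ?thesis using le0 ge le1 by simp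
      qed
      then show ?thesis using ij Dip by (simp add: mult_nonneg_nonpos)
    qed
  qed
  have I1: "inter M ?D' C = (\<Sum>i\<in>UNIV. C i * inter M ?D' (E i))"
    using idot[of C ?D'] isym by metis
  have I2: "inter M ?D ?D = (\<Sum>i\<in>UNIV. ?D i * inter M ?D (E i))" by (rule idot)
  have split: "C i * inter M ?D' (E i) + ?D i * inter M ?D (E i) \<le>
      (if i = j then - ?D j else 0) + (if i = A then C A * inter M ?D' (E A) else 0)" for i
  proof (cases "?D' i = 0")
    case True
    then have "C i = ?D i" unfolding C_def by simp
    moreover have "i \<noteq> A" using True D'A by auto
    ultimately show ?thesis using tb2[OF True] by (simp add: distrib_left)
  next
    case False
    then have "inter M ?D (E i) = 0" using tyuD(3)[OF sk] unfolding num_trivial_def supp_def by blast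
    moreover have "i \<noteq> j" using False D'j by auto
    ultimately show ?thesis using tb1[OF False] by (cases "i = A") auto
  qed
  have "inter M ?D' C + inter M ?D ?D \<le> (\<Sum>i\<in>UNIV. (if i = j then - ?D j else 0) + (if i = A then C A * inter M ?D' (E A) else 0))"
    unfolding I1 I2 sum.distrib[symmetric] by (rule sum_mono) (rule split)
  also have "\<dots> = - ?D j + C A * inter M ?D' (E A)" by (simp add: sum.distrib)
  finally have main: "inter M ?D' C + inter M ?D ?D \<le> - ?D j + C A * inter M ?D' (E A)" .
  have "inter M ?D' C = inter M ?D' ?D - inter M ?D' ?D'" unfolding C_def by (rule inter_diff_right)
  moreover have "inter M ?D' ?D = 0"
  proof -
    have "inter M ?D ?D' = 0" using orth[of k "Suc k"] sk by simp
    then show ?thesis using isym[of ?D' ?D] by simp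
  qed
  moreover have "inter M ?D ?D = 2 * p - 2 - ?D A * kap" by (rule sq_formula[OF Dk0[OF k] paDk[OF k]])
  moreover have "inter M ?D' ?D' = 2 * p - 2 - ?D' A * kap" by (rule sq_formula[OF Dk0[OF sk] paDk[OF sk]])
  moreover have "1 \<le> ?D j" using nonneg_of[OF Dk0[OF k], of j] Dj by simp
  ultimately have "1 \<le> C A * inter M ?D' (E A) + C A * kap" using main unfolding C_def by (simp add: algebra_simps)
  then have prod: "1 \<le> C A * (kap + inter M ?D' (E A))" by (simp add: algebra_simps)
  have CA: "0 < C A"
  proof (rule ccontr)
    assume "\<not> 0 < C A" moreover have "0 \<le> C A" using Cnn by blast
    ultimately have "C A = 0" by simp
    then show False using prod by simp
  qed
  have kd: "0 < kap + inter M ?D' (E A)"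
  proof (rule ccontr)
    assume "\<not> ?thesis"
    then have "C A * (kap + inter M ?D' (E A)) \<le> 0" using CA by (simp add: mult_nonneg_nonpos less_imp_le)
    then show False using prod by simp
  qed
  have DAZ: "?D A \<le> Z A" using DkZ[OF k] unfolding le_fun_def by blast
  have ZmD': "Zm A \<le> ?D' A" using Zm_le[OF sk] unfolding le_fun_def by blast
  have "Zm A < Z A" using CA DAZ ZmD' unfolding C_def by simp
  note drop = key_A_drop[OF this]
  show False
  proof (cases "Suc k = nn - 1")
    case True
    then have "?D' = Zm" using last_Zm by simp
    then show False using kd drop by simp
  next
    case False
    then have sk2: "Suc k < nn - 1" using sk by simp
    have D'A1: "?D' A = 1" and DA2: "?D A = 2" using drop CA DAZ ZmD' unfolding C_def by auto
    have p1: "p = 1" using drop by simp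
    define X1 where "X1 = (\<lambda>x. ?D' x + Zm x)"
    have "inter M ?D' Zm = 0" using orth[of "Suc k" "nn - 1"] sk2 last_Zm by simp
    then have paX1: "pa M g X1 = 1" unfolding X1_def using paadd[of ?D' Zm] paDk[OF sk] paZm p1 by simp
    define mn where "mn = (\<lambda>x. min (X1 x) (?D x))"
    define mx where "mx = (\<lambda>x. max (X1 x) (?D x))"
    have D'nn: "\<forall>x. 0 \<le> ?D' x" using nonneg_of[OF Dk0[OF sk]] by blast
    have Dnn: "\<forall>x. 0 \<le> ?D x" using nonneg_of[OF Dk0[OF k]] by blast
    have Zmnn: "\<forall>x. 0 \<le> Zm x" using nonneg_of[OF Zm0] by blast
    have X1nn: "\<forall>x. 0 \<le> X1 x" unfolding X1_def using D'nn Zmnn by (simp add: add_nonneg_nonneg)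
    have mnA: "mn A = 2" unfolding mn_def X1_def using D'A1 DA2 drop by simp
    have mn0: "zc < mn" using X1nn Dnn mnA unfolding mn_def by (intro zc_less_of[where y=A]) auto
    have mx0: "zc < mx" using X1nn Dnn DA2 unfolding mx_def by (intro zc_less_of[where y=A]) (auto simp: max_def)
    have "pa M g mn + pa M g mx \<ge> pa M g X1 + pa M g ?D" unfolding mn_def mx_def by (rule pa_lattice)
    moreover have "pa M g mx \<le> 1" by (rule elliptic_bound[OF p1 mx0])
    moreover have "pa M g mn \<le> 1" by (rule elliptic_bound[OF p1 mn0])
    ultimately have pamn: "pa M g mn = pa M g ?D" using paX1 paDk[OF k] p1 by simp
    have mnle: "mn \<le> ?D" unfolding mn_def le_fun_def by simp
    have ZmD'all: "\<forall>x. Zm x \<le> ?D' x" using Zm_le[OF sk] unfolding le_fun_def by blast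
    have suppmn: "?D' x \<noteq> 0" if "mn x \<noteq> 0" for x
    proof (rule ccontr)
      assume "\<not> ?D' x \<noteq> 0"
      then have "?D' x = 0" by simp
      moreover have "Zm x = 0" using ZmD'all Zmnn \<open>?D' x = 0\<close> by (metis order.antisym)
      ultimately have "X1 x = 0" unfolding X1_def by simp
      then have "mn x = 0" unfolding mn_def using Dnn by (simp add: min_def)
      then show False using that by simp
    qed
    have nt: "num_trivial M ?D mn"
      unfolding num_trivial_def
    proof
      fix x assume "x \<in> supp mn"
      then have "?D' x \<noteq> 0" using suppmn unfolding supp_def by blast
      then show "inter M ?D (E x) = 0" using tyuD(3)[OF sk] unfolding num_trivial_def supp_def by blast
    qed
    have ne: "mn \<noteq> ?D"
    proof
      assume h: "mn = ?D"
      have "inter M ?D ?D = (\<Sum>i\<in>UNIV. ?D i * inter M ?D (E i))" by (rule idot)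
      also have "\<dots> = 0"
      proof (rule sum.neutral, rule ballI)
        fix i show "?D i * inter M ?D (E i) = 0"
        proof (cases "?D i = 0")
          case False
          then have "mn i \<noteq> 0" using h by simp
          then have "?D' i \<noteq> 0" by (rule suppmn)
          then have "inter M ?D (E i) = 0" using tyuD(3)[OF sk] unfolding num_trivial_def supp_def by blast
          then show ?thesis by simp
        qed simp
      qed
      moreover have "?D \<noteq> zc" using Dk0[OF k] by auto
      then have "inter M ?D ?D < 0" by (rule negdef)
      ultimately show False by simp
    qed
    have lt: "mn < ?D" using mnle ne by simp
    have "mn \<le> ?D'" by (rule tyuD(5)[OF sk mn0 lt nt pamn])
    then have "mn A \<le> ?D' A" unfolding le_fun_def by blast
    then show False using mnA D'A1 by simp
  qed
qed

end

lemma inter_sum_left: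
  assumes "finite K"
  shows "inter M (\<lambda>x. \<Sum>k\<in>K. f k x) X = (\<Sum>k\<in>K. inter M (f k) X)"
  using assms
proof (induction K rule: finite_induct)
  case empty
  have "(\<lambda>x. \<Sum>k\<in>{}. f k x) = zc" unfolding zc_def by simp
  then show ?case by simp
next
  case (insert a K)
  have "(\<lambda>x. \<Sum>k\<in>insert a K. f k x) = (\<lambda>x. f a x + (\<Sum>k\<in>K. f k x))" using insert.hyps by simp
  then show ?case using insert by (simp add: inter_add_left)
qed

lemma canon_unique:
  fixes M :: "'i::finite \<Rightarrow> 'i \<Rightarrow> int"
  assumes symM: "\<forall>i j. M i j = M j i" and nd: "\<forall>D. D \<noteq> zc \<longrightarrow> inter M D D < 0"
    and Z1: "is_canonical_cycle M g Z1" and Z2: "is_canonical_cycle M g Z2"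
  shows "Z1 = Z2"
proof -
  define X where "X = (\<lambda>j. Z1 j - Z2 j)"
  have X0: "(\<Sum>j\<in>UNIV. X j * of_int (M j i)) = 0" for i
  proof -
    have "(\<Sum>j\<in>UNIV. X j * of_int (M j i)) = (\<Sum>j\<in>UNIV. Z1 j * of_int (M j i)) - (\<Sum>j\<in>UNIV. Z2 j * of_int (M j i))"
      unfolding X_def by (simp add: left_diff_distrib sum_subtractf)
    then show ?thesis using Z1 Z2 unfolding is_canonical_cycle_def by simp
  qed
  define q where "q = (\<lambda>j. quotient_of (X j))"
  define N where "N = (\<Prod>j\<in>UNIV. snd (q j))"
  define W where "W = (\<lambda>j. fst (q j) * (\<Prod>i\<in>UNIV - {j}. snd (q i)))"
  have dpos: "0 < snd (q j)" for j unfolding q_def by (metis quotient_of_denom_pos surjective_pairing)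
  have Npos: "0 < N" unfolding N_def using dpos by (simp add: prod_pos)
  have Xq: "X j = of_int (fst (q j)) / of_int (snd (q j))" for j
    unfolding q_def by (metis quotient_of_div surjective_pairing)
  have WX: "(of_int (W j) :: rat) = of_int N * X j" for j
  proof -
    have "N = snd (q j) * (\<Prod>i\<in>UNIV - {j}. snd (q i))" unfolding N_def
      by (simp add: prod.remove)
    then have "(of_int N :: rat) * X j = of_int (snd (q j)) * of_int (\<Prod>i\<in>UNIV - {j}. snd (q i)) * (of_int (fst (q j)) / of_int (snd (q j)))"
      using Xq by simp
    also have "\<dots> = of_int (fst (q j)) * of_int (\<Prod>i\<in>UNIV - {j}. snd (q i))"
      using dpos[of j] by (simp add: field_simps)
    finally show ?thesis unfolding W_def by simp
  qed
  have W0: "inter M W (E i) = 0" for i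
  proof -
    have "(of_int (inter M W (E i)) :: rat) = (\<Sum>j\<in>UNIV. of_int (W j) * of_int (M j i))"
      unfolding inter_E_right by simp
    also have "\<dots> = of_int N * (\<Sum>j\<in>UNIV. X j * of_int (M j i))"
      unfolding WX by (simp add: sum_distrib_left mult.assoc)
    also have "\<dots> = 0" using X0 by simp
    finally show ?thesis by simp
  qed
  have "inter M W W = 0" using inter_as_dot[OF symM, of W W] W0 by simp
  then have "W = zc" using nd by force
  then have "X j = 0" for j using WX[of j] Npos unfolding zc_def by simp
  then show ?thesis unfolding X_def by auto
qed

context thm_ctx begin

abbreviation "Y \<equiv> yau_cycle ds"

lemma Y_sum: "Y = (\<lambda>x. \<Sum>k\<in>{0..<nn}. Dk k x)"
  unfolding yau_cycle_def by (simp add: sum_list_sum_nth)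

lemma uY: "inter M Y X = (\<Sum>k\<in>{0..<nn}. inter M (Dk k) X)"
  unfolding Y_sum by (rule inter_sum_left) simp

lemma u_nonneg: assumes jA: "j \<noteq> A" shows "0 \<le> inter M Y (E j)"
proof -
  define f where "f = (\<lambda>k. inter M (Dk k) (E j))"
  define K where "K = {k. k < nn \<and> Dk k j \<noteq> 0}"
  have fin: "finite K" unfolding K_def by simp
  have "0 \<in> K" unfolding K_def using nn_pos D0Z Zsupp by simp
  then have KK: "K \<noteq> {}" by blast
  define k0 where "k0 = Max K"
  have k0K: "k0 \<in> K" unfolding k0_def using fin KK by (rule Max_in)
  have k0: "k0 < nn" "Dk k0 j \<noteq> 0" using k0K unfolding K_def by auto
  have after: "Dk k j = 0" if "k0 < k" "k < nn" for k
  proof (rule ccontr)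
    assume "Dk k j \<noteq> 0"
    then have "k \<in> K" unfolding K_def using that by simp
    then have "k \<le> k0" unfolding k0_def using fin by simp
    then show False using that by simp
  qed
  have before: "f k = 0" if "k < k0" for k
    unfolding f_def using triv_later[OF that k0(1) k0(2)] .
  have afterf: "0 \<le> f k" if "k0 < k" "k < nn" for k
    unfolding f_def using dot_outside_nonneg[of "Dk k" j] nonneg_of[OF Dk0[OF that(2)]] after[OF that] by blast
  have fk0: "-1 \<le> f k0" "f k0 \<le> 0" unfolding f_def
    using dot_ge_m1[OF jA Dk0[OF k0(1)] DkZ[OF k0(1)] k0(2) paDk[OF k0(1)]] Dk_nef[OF k0] by auto
  have "0 \<le> (\<Sum>k\<in>{0..<nn}. f k)"
  proof (cases "Suc k0 < nn \<and> f k0 = -1")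
    case False
    have "0 \<le> f k0"
    proof (cases "Suc k0 < nn")
      case True then show ?thesis using False fk0 by simp
    next
      case c: False
      then have "k0 = nn - 1" using k0 by simp
      then have "Dk k0 = Zm" using last_Zm by simp
      then show ?thesis unfolding f_def using Zm_dot0[OF jA] k0(2) by simp
    qed
    then have "\<forall>k\<in>{0..<nn}. 0 \<le> f k" using before afterf by (metis atLeastLessThan_iff linorder_neqE_nat order_refl)
    then show ?thesis by (meson sum_nonneg)
  next
    case True
    then have sk: "Suc k0 < nn" and m1: "f k0 = -1" by auto
    have c1: "1 \<le> f (Suc k0)" unfolding f_def
      by (rule counting[OF sk jA k0(2) after[of "Suc k0"]]) (use sk m1 f_def in auto)
    define h where "h = (\<lambda>k. (if k = k0 then -1 else 0) + (if k = Suc k0 then 1 else (0::int)))"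
    have "h k \<le> f k" if "k \<in> {0..<nn}" for k
    proof -
      consider "k < k0" | "k = k0" | "k = Suc k0" | "Suc k0 < k" by linarith
      then show ?thesis
      proof cases
        case 1 then show ?thesis unfolding h_def using before by simp
      next
        case 2 then show ?thesis unfolding h_def using m1 by simp
      next
        case 3 then show ?thesis unfolding h_def using c1 by simp
      next
        case 4 then show ?thesis unfolding h_def using afterf[of k] that by simp
      qed
    qed
    then have "(\<Sum>k\<in>{0..<nn}. h k) \<le> (\<Sum>k\<in>{0..<nn}. f k)" by (rule sum_mono)
    moreover have "(\<Sum>k\<in>{0..<nn}. h k) = 0" unfolding h_def using sk k0 by (simp add: sum.distrib)
    ultimately show ?thesis by simp
  qed
  then show ?thesis unfolding uY f_def .
qed

lemma uA: "inter M Y (E A) = inter M Zm (E A)"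
proof -
  have "inter M Y (E A) = (\<Sum>k\<in>{0..<nn}. if k = nn - 1 then inter M Zm (E A) else 0)"
    unfolding uY
  proof (rule sum.cong)
    fix k assume "k \<in> {0..<nn}"
    then show "inter M (Dk k) (E A) = (if k = nn - 1 then inter M Zm (E A) else 0)"
      using dotA0[of k] last_Zm by auto
  qed simp
  also have "\<dots> = inter M Zm (E A)" using nn_pos by simp
  finally show ?thesis .
qed

lemma YZ: "inter M Y Z = -2"
proof -
  have "inter M Y Z = (\<Sum>k\<in>{0..<nn}. if k = 0 then -2 else 0)"
    unfolding uY
  proof (rule sum.cong)
    fix k assume k: "k \<in> {0..<nn}"
    show "inter M (Dk k) Z = (if k = 0 then -2 else 0)"
    proof (cases "k = 0")
      case True then show ?thesis using D0Z Zsq by simp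
    next
      case False
      then have "inter M (Dk 0) (Dk k) = 0" using orth[of 0 k] k by simp
      then show ?thesis using False D0Z isym[of "Dk k" Z] by simp
    qed
  qed simp
  also have "\<dots> = -2" using nn_pos by simp
  finally show ?thesis .
qed

lemma u_zero: assumes "j \<noteq> A" shows "inter M Y (E j) = 0"
proof -
  define u where "u = (\<lambda>i. inter M Y (E i))"
  have "inter M Z Y = (\<Sum>i\<in>UNIV. Z i * u i)" unfolding u_def by (rule idot)
  then have "(\<Sum>i\<in>UNIV. Z i * u i) = -2" using YZ isym by metis
  moreover have "(\<Sum>i\<in>UNIV. Z i * u i) = Z A * u A + (\<Sum>i\<in>UNIV - {A}. Z i * u i)"
    by (simp add: sum.remove)
  moreover have "Z A * u A = -2" unfolding u_def uA by (rule key_A)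
  ultimately have s0: "(\<Sum>i\<in>UNIV - {A}. Z i * u i) = 0" by simp
  have nn: "\<forall>i\<in>UNIV - {A}. 0 \<le> Z i * u i"
    using u_nonneg Zgt unfolding u_def by (simp add: less_imp_le)
  have "\<forall>i\<in>UNIV - {A}. Z i * u i = 0" using sum_nonneg_eq_0_iff[of "UNIV - {A}" "\<lambda>i. Z i * u i"] s0 nn by simp
  then have "Z j * u j = 0" using assms by blast
  then show ?thesis using Zgt[of j] unfolding u_def by simp
qed

lemma canon_Y: "p * inter M Y (E i) = - canon M g i"
proof (cases "i = A")
  case False then show ?thesis using u_zero canon0 by simp
next
  case True
  have "Z A * (p * inter M Y (E A)) = p * (Z A * inter M Zm (E A))" unfolding uA by (simp add: algebra_simps)
  also have "\<dots> = - (2 * p)" using key_A by simp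
  also have "\<dots> = Z A * (- kap)" using Z_formula by simp
  finally have "Z A * (p * inter M Y (E A)) = Z A * (- kap)" .
  then have "p * inter M Y (E A) = - kap" using ZA_pos mult_left_cancel[of "Z A" "p * inter M Y (E A)" "- kap"] by simp
  then show ?thesis using True unfolding kap_def by simp
qed

lemma is_canon: "is_canonical_cycle M g (\<lambda>i. of_int (p * Y i))"
  unfolding is_canonical_cycle_def
proof
  fix i
  have "(\<Sum>j\<in>UNIV. (of_int (p * Y j) :: rat) * of_int (M j i)) = of_int (p * (\<Sum>j\<in>UNIV. Y j * M j i))"
    by (simp add: sum_distrib_left mult.assoc)
  also have "\<dots> = of_int (p * inter M Y (E i))" unfolding inter_E_right ..
  also have "\<dots> = - of_int (canon M g i)" using canon_Y by simp
  finally show "(\<Sum>j\<in>UNIV. (of_int (p * Y j) :: rat) * of_int (M j i)) = - of_int (canon M g i)" .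
qed

lemma final: "numerically_gorenstein M g \<and> canonical_cycle M g = (\<lambda>i. of_int (p * Y i))"
proof -
  have nd: "\<forall>D. D \<noteq> zc \<longrightarrow> inter M D D < 0" using negdef by blast
  have eq: "canonical_cycle M g = (\<lambda>i. of_int (p * Y i))"
    unfolding canonical_cycle_def
  proof (rule the_equality)
    show "is_canonical_cycle M g (\<lambda>i. of_int (p * Y i))" by (rule is_canon)
  next
    fix ZK assume "is_canonical_cycle M g ZK"
    then show "ZK = (\<lambda>i. of_int (p * Y i))" using canon_unique[OF symM nd _ is_canon] by blast
  qed
  show ?thesis unfolding numerically_gorenstein_def eq by simp
qed

end

theorem theorem3p5:
  fixes M :: "'i::finite \<Rightarrow> 'i \<Rightarrow> int" and g :: "'i \<Rightarrow> nat"
    and ds :: "('i \<Rightarrow> int) list"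
  assumes "exc_config M"
    and "minimal_resolution M g"
    and "pa M g (fund_cycle M) > 0"
    and "inter M (fund_cycle M) (fund_cycle M) = -2"
    and "ess_irreducible M g (fund_cycle M)"
    and "is_yau_seq M g ds"
    and "last ds = Zmin M g"
  shows "numerically_gorenstein M g \<and>
         canonical_cycle M g = (\<lambda>i. of_int (pa M g (fund_cycle M) * yau_cycle ds i))"
proof -
  interpret cfg M g using assms(1,2) by unfold_locales
  have nd: "\<forall>D. D \<noteq> zc \<longrightarrow> Defs.inter M D D < 0" using negdef by blast
  have strict: "\<exists>X. \<forall>i. Defs.inter M X (E i) < 0" by (rule exists_strict_neg[OF symM nd])
  interpret thm_ctx M g ds using strict assms(3-7) by unfold_locales
  show ?thesis by (rule final)
qed

end
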